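(* The family $\mathcal{P}_{gd}$ of good isomorphisms is cofinal in $\mathcal{P}$ (every $p\in\mathcal{P}$ is extended by some element of $\mathcal{P}_{gd}$). Furthermore, for every $\gamma\in\mathrm{Aut}(\mathbb{Q},<)$ the family $\mathcal{P}_{gd}\cap\mathcal{P}_\gamma$ is cofinal in $\mathcal{P}_\gamma$.
   Context: $\mathcal{P}$ is the set of finite partial isomorphisms of $(\mathbb{Q},<)$, ordered by extension. $\mathrm{Aut}(\mathbb{Q},<)$ carries the topology of pointwise convergence; $\mathcal{C}_\gamma$ is the closure of $\{\sigma\gamma\sigma^{-1}:\sigma\in\mathrm{Aut}(\mathbb{Q},<)\}$ and $\mathcal{P}_\gamma=\{p\in\mathcal{P}: p$ extends to an element of $\mathcal{C}_\gamma\}$. For $a\in\mathrm{Dom}(p)\cup\mathrm{Rng}(p)$, $\wp_p(a)$ is the sign ($+,0,-$) of $p(a)-a$ if $a\in\mathrm{Dom}(p)$, or of $a-p^{-1}(a)$ if $a\in\mathrm{Rng}(p)$. Elements $a,b$ are $p$-related if $a=b$, or if $\wp_p(a)=+$ or $\wp_p(b)=+$ and one of $a\le b\le p(a)$, $b\le a\le p(b)$, $p^{-1}(a)\le b\le a$, $p^{-1}(b)\le a\le b$ holds, or if $\wp_p(a)=-$ or $\wp_p(b)=-$ and one of $a\le b\le p^{-1}(a)$, $b\le a\le p^{-1}(b)$, $p(a)\le b\le a$, $p(b)\le a\le b$ holds (when defined). $\sim_p$ is the generated equivalence; classes meeting $\mathrm{Dom}(p)\cup\mathrm{Rng}(p)$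 are colored $p$-orbitals, with parity $\wp_p$, linearly ordered by $I\prec J$ iff every element of $I$ is below every element of $J$. A bad pair of $p$ is $a<a'$ in $\mathrm{Dom}(p)\cup\mathrm{Rng}(p)$ such that either the colored $p$-orbitals of $a,a'$ and all colored $p$-orbitals between them have parity $+$ and $p(a)$, $p^{-1}(a')$ are undefined, or they all have parity $-$ and $p(a')$, $p^{-1}(a)$ are undefined. $p$ is a good isomorphism ($p\in\mathcal{P}_{gd}$) if no colored $p$-orbital of parity $+$ or $-$ contains a bad pair, and any two colored $p$-orbitals of parities in $\{+,-\}$ which are neighbours in the ordering of colored $p$-orbitals have different parities. *)

theory Defs
  imports Main "HOL.Rat"
begin

definition D :: "(rat \<rightharpoonup> rat) \<Rightarrow> rat set" where
  "D p = dom p \<union> ran p"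

definition PI :: "(rat \<rightharpoonup> rat) set" where
  "PI = {p. finite (dom p) \<and>
            (\<forall>a\<in>dom p. \<forall>b\<in>dom p. a < b \<longrightarrow> the (p a) < the (p b))}"

definition AutQ :: "(rat \<Rightarrow> rat) set" where
  "AutQ = {f. bij f \<and> (\<forall>x y. x < y \<longleftrightarrow> f x < f y)}"

(* closure of the conjugacy class of gamma in Aut(Q,<), topology of pointwise convergence
   (Q discrete): g is in the closure iff every finite restriction of g is matched by a conjugate *)
definition Cl :: "(rat \<Rightarrow> rat) \<Rightarrow> (rat \<Rightarrow> rat) set" where
  "Cl \<gamma> = {g \<in> AutQ. \<forall>A. finite A \<longrightarrow>
              (\<exists>\<sigma>\<in>AutQ. \<forall>x\<in>A. g x = (\<sigma> \<circ> \<gamma> \<circ> inv \<sigma>) x)}"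

definition P_gamma :: "(rat \<Rightarrow> rat) \<Rightarrow> (rat \<rightharpoonup> rat) set" where
  "P_gamma \<gamma> = {p \<in> PI. \<exists>g\<in>Cl \<gamma>. p \<subseteq>\<^sub>m (Some \<circ> g)}"

(* parity: 1 for +, 0 for 0, -1 for -; set to 0 outside Dom(p) \<union> Rng(p) (never used there) *)
definition par :: "(rat \<rightharpoonup> rat) \<Rightarrow> rat \<Rightarrow> rat" where
  "par p a = (if a \<in> dom p then sgn (the (p a) - a)
              else if a \<in> ran p then sgn (a - (THE c. p c = Some a))
              else 0)"

definition prel :: "(rat \<rightharpoonup> rat) \<Rightarrow> rat \<Rightarrow> rat \<Rightarrow> bool" where
  "prel p a b \<longleftrightarrow> a = b \<or>
     ((par p a = 1 \<or> par p b = 1) \<and>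
       ((\<exists>c. p a = Some c \<and> a \<le> b \<and> b \<le> c) \<or>
        (\<exists>c. p b = Some c \<and> b \<le> a \<and> a \<le> c) \<or>
        (\<exists>c. p c = Some a \<and> c \<le> b \<and> b \<le> a) \<or>
        (\<exists>c. p c = Some b \<and> c \<le> a \<and> a \<le> b))) \<or>
     ((par p a = -1 \<or> par p b = -1) \<and>
       ((\<exists>c. p c = Some a \<and> a \<le> b \<and> b \<le> c) \<or>
        (\<exists>c. p c = Some b \<and> b \<le> a \<and> a \<le> c) \<or>
        (\<exists>c. p a = Some c \<and> c \<le> b \<and> b \<le> a) \<or>
        (\<exists>c. p b = Some c \<and> c \<le> a \<and> a \<le> b)))"

definition psim :: "(rat \<rightharpoonup> rat) \<Rightarrow> rat \<Rightarrow> rat \<Rightarrow> bool" where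
  "psim p = equivclp (prel p)"

definition orbital :: "(rat \<rightharpoonup> rat) \<Rightarrow> rat \<Rightarrow> rat set" where
  "orbital p a = {b. psim p a b}"

definition colored :: "(rat \<rightharpoonup> rat) \<Rightarrow> rat set set" where
  "colored p = {orbital p a | a. a \<in> D p}"

definition orb_par :: "(rat \<rightharpoonup> rat) \<Rightarrow> rat set \<Rightarrow> rat \<Rightarrow> bool" where
  "orb_par p I s \<longleftrightarrow> I \<in> colored p \<and> (\<forall>x\<in>I \<inter> D p. par p x = s)"

definition oprec :: "rat set \<Rightarrow> rat set \<Rightarrow> bool" where
  "oprec I J \<longleftrightarrow> (\<forall>x\<in>I. \<forall>y\<in>J. x < y)"

definition between :: "(rat \<rightharpoonup> rat) \<Rightarrow> rat \<Rightarrow> rat \<Rightarrow> rat set \<Rightarrow> bool" where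
  "between p a a' K \<longleftrightarrow> K \<in> colored p \<and>
     (K = orbital p a \<or> K = orbital p a' \<or>
      (oprec (orbital p a) K \<and> oprec K (orbital p a')))"

definition bad_pair :: "(rat \<rightharpoonup> rat) \<Rightarrow> rat \<Rightarrow> rat \<Rightarrow> bool" where
  "bad_pair p a a' \<longleftrightarrow> a \<in> D p \<and> a' \<in> D p \<and> a < a' \<and>
     (((\<forall>K. between p a a' K \<longrightarrow> orb_par p K 1) \<and> p a = None \<and> a' \<notin> ran p) \<or>
      ((\<forall>K. between p a a' K \<longrightarrow> orb_par p K (-1)) \<and> p a' = None \<and> a \<notin> ran p))"

definition neighbours :: "(rat \<rightharpoonup> rat) \<Rightarrow> rat set \<Rightarrow> rat set \<Rightarrow> bool" where
  "neighbours p I J \<longleftrightarrow> I \<in> colored p \<and> J \<in> colored p \<and> oprec I J \<and>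
     \<not> (\<exists>K\<in>colored p. oprec I K \<and> oprec K J)"

definition P_gd :: "(rat \<rightharpoonup> rat) set" where
  "P_gd = {p \<in> PI.
     (\<forall>I s. orb_par p I s \<and> s \<in> {1, -1} \<longrightarrow>
        \<not> (\<exists>a\<in>I. \<exists>a'\<in>I. bad_pair p a a')) \<and>
     (\<forall>I J s t. orb_par p I s \<and> orb_par p J t \<and> s \<in> {1, -1} \<and> t \<in> {1, -1} \<and>
        (neighbours p I J \<or> neighbours p J I) \<longrightarrow> s \<noteq> t)}"

end

theory Submission
  imports Defs
begin

lemma AutQ_less: "f \<in> AutQ \<Longrightarrow> (f x < f y) = (x < y)"
  unfolding AutQ_def by auto

lemma AutQ_le: "f \<in> AutQ \<Longrightarrow> (f x \<le> f y) = (x \<le> y)"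
  using AutQ_less[of f y x] by (simp add: not_less[symmetric])

lemma AutQ_bij: "f \<in> AutQ \<Longrightarrow> bij f"
  unfolding AutQ_def by auto

lemma AutQ_inj: "f \<in> AutQ \<Longrightarrow> (f x = f y) = (x = y)"
  by (metis AutQ_bij bij_def inj_eq)

lemma AutQ_f_inv: "f \<in> AutQ \<Longrightarrow> f (inv f x) = x"
  by (meson AutQ_bij bij_inv_eq_iff)

lemma AutQ_inv_f: "f \<in> AutQ \<Longrightarrow> inv f (f x) = x"
  by (metis AutQ_bij bij_def inv_f_f)

lemma AutQ_inv: "f \<in> AutQ \<Longrightarrow> inv f \<in> AutQ"
proof -
  assume a: "f \<in> AutQ"
  have "bij (inv f)" using a AutQ_bij bij_imp_bij_inv by blast
  moreover have "\<forall>x y. x < y \<longleftrightarrow> inv f x < inv f y"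
    using a AutQ_less[of f] AutQ_f_inv[of f] by metis
  ultimately show ?thesis unfolding AutQ_def by auto
qed

lemma AutQ_comp: "f \<in> AutQ \<Longrightarrow> g \<in> AutQ \<Longrightarrow> f \<circ> g \<in> AutQ"
  unfolding AutQ_def by (auto intro: bij_comp)

lemma AutQ_id: "id \<in> AutQ"
  unfolding AutQ_def by auto

lemma AutQ_funpow: "f \<in> AutQ \<Longrightarrow> f ^^ n \<in> AutQ"
  by (induction n) (auto simp: AutQ_id AutQ_comp)

lemma AutQ_I: "strict_mono f \<Longrightarrow> surj f \<Longrightarrow> f \<in> AutQ"
proof -
  assume a: "strict_mono f" "surj f"
  have "inj f" using a(1) strict_mono_imp_inj_on by blast
  then have "bij f" using a(2) by (simp add: bij_def)
  moreover have "\<forall>x y. x < y \<longleftrightarrow> f x < f y" using a(1) strict_mono_less by blast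
  ultimately show ?thesis unfolding AutQ_def by auto
qed

lemma funpow_inv_cancel: "f \<in> AutQ \<Longrightarrow> (f ^^ n) ((inv f ^^ n) y) = y"
proof (induction n arbitrary: y)
  case (Suc n)
  have e1: "(f ^^ Suc n) z = (f ^^ n) (f z)" for z by (simp add: funpow_swap1)
  have "(f ^^ Suc n) ((inv f ^^ Suc n) y) = (f ^^ n) (f (inv f ((inv f ^^ n) y)))"
    unfolding e1 by simp
  then show ?case using Suc by (simp add: AutQ_f_inv)
qed simp

lemma funpow_inv_cancel2: "f \<in> AutQ \<Longrightarrow> (inv f ^^ n) ((f ^^ n) y) = y"
proof (induction n arbitrary: y)
  case (Suc n)
  have e1: "(inv f ^^ Suc n) z = (inv f ^^ n) (inv f z)" for z by (simp add: funpow_swap1)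
  have "(inv f ^^ Suc n) ((f ^^ Suc n) y) = (inv f ^^ n) (inv f (f ((f ^^ n) y)))"
    unfolding e1 by simp
  then show ?case using Suc by (simp add: AutQ_inv_f)
qed simp

lemma funpow_less: "f \<in> AutQ \<Longrightarrow> ((f ^^ n) x < (f ^^ n) y) = (x < y)"
  using AutQ_funpow AutQ_less by blast

lemma funpow_le: "f \<in> AutQ \<Longrightarrow> ((f ^^ n) x \<le> (f ^^ n) y) = (x \<le> y)"
  using AutQ_funpow AutQ_le by blast

lemma funpow_add_app: "(f ^^ (m + n)) x = (f ^^ m) ((f ^^ n) x)"
  by (simp add: funpow_add)

lemma funpow_pos_ge: "f \<in> AutQ \<Longrightarrow> f x > x \<Longrightarrow> (f ^^ n) x \<ge> x"
proof (induction n)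
  case (Suc n)
  then have "(f ^^ n) (f x) \<ge> (f ^^ n) x" using funpow_le[of f n] by auto
  then show ?case using Suc by (simp add: funpow_swap1)
qed auto

lemma funpow_pos_gt: "f \<in> AutQ \<Longrightarrow> f x > x \<Longrightarrow> n > 0 \<Longrightarrow> (f ^^ n) x > x"
proof -
  assume a: "f \<in> AutQ" "f x > x" "n > 0"
  then obtain k where n: "n = Suc k" using gr0_conv_Suc by auto
  have "(f ^^ k) (f x) \<ge> f x" using funpow_pos_ge[of f "f x" k] a
    by (metis AutQ_less)
  then show ?thesis using a n by (simp add: funpow_swap1)
qed

lemma funpow_neg_le: "f \<in> AutQ \<Longrightarrow> f x < x \<Longrightarrow> (f ^^ n) x \<le> x"
proof (induction n)
  case (Suc n)
  then have "(f ^^ n) (f x) \<le> (f ^^ n) x" using funpow_le[of f n] by auto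
  then show ?case using Suc by (simp add: funpow_swap1)
qed auto

lemma funpow_neg_lt: "f \<in> AutQ \<Longrightarrow> f x < x \<Longrightarrow> n > 0 \<Longrightarrow> (f ^^ n) x < x"
proof -
  assume a: "f \<in> AutQ" "f x < x" "n > 0"
  then obtain k where n: "n = Suc k" using gr0_conv_Suc by auto
  have "(f ^^ k) (f x) \<le> f x" using funpow_neg_le[of f "f x" k] a
    by (metis AutQ_less)
  then show ?thesis using a n by (simp add: funpow_swap1)
qed

lemma funpow_fix: "f x = x \<Longrightarrow> (f ^^ n) x = x"
  by (induction n) auto

definition hle :: "(rat \<Rightarrow> rat) \<Rightarrow> rat \<Rightarrow> rat \<Rightarrow> bool" where
  "hle h a b \<longleftrightarrow> (\<exists>m n. (h ^^ m) a \<le> (h ^^ n) b)"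

definition so :: "(rat \<Rightarrow> rat) \<Rightarrow> rat \<Rightarrow> rat \<Rightarrow> bool" where
  "so h a b \<longleftrightarrow> hle h a b \<and> hle h b a"

lemma hle_le: "a \<le> b \<Longrightarrow> hle h a b"
  unfolding hle_def by (metis funpow_0)

lemma so_refl: "so h a a" unfolding so_def by (simp add: hle_le)

lemma so_sym: "so h a b \<Longrightarrow> so h b a" unfolding so_def by auto

lemma hle_trans: assumes "h \<in> AutQ" "hle h a b" "hle h b c" shows "hle h a c"
proof -
  obtain m n where 1: "(h ^^ m) a \<le> (h ^^ n) b" using assms unfolding hle_def by auto
  obtain m' n' where 2: "(h ^^ m') b \<le> (h ^^ n') c" using assms unfolding hle_def by auto
  have "(h ^^ (m' + m)) a \<le> (h ^^ (m' + n)) b" using 1 funpow_le[OF assms(1)]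
    by (simp add: funpow_add_app)
  also have "\<dots> = (h ^^ n) ((h ^^ m') b)" by (metis funpow_add_app add.commute)
  also have "\<dots> \<le> (h ^^ n) ((h ^^ n') c)" using 2 funpow_le[OF assms(1)] by auto
  also have "\<dots> = (h ^^ (n + n')) c" by (simp add: funpow_add_app)
  finally show ?thesis unfolding hle_def by blast
qed

lemma so_trans: "h \<in> AutQ \<Longrightarrow> so h a b \<Longrightarrow> so h b c \<Longrightarrow> so h a c"
  unfolding so_def using hle_trans by blast

lemma so_pow: "so h a ((h ^^ k) a)"
  unfolding so_def hle_def by (metis funpow_0 order_refl)

lemma so_h: "so h a (h a)"
  using so_pow[of h a 1] by simp

lemma so_inv_pow: "h \<in> AutQ \<Longrightarrow> so h a ((inv h ^^ k) a)"
  unfolding so_def hle_def by (metis funpow_0 funpow_inv_cancel order_refl)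

lemma so_conv: assumes "h \<in> AutQ" "so h a b" "a \<le> w" "w \<le> b" shows "so h a w"
  using assms hle_le hle_trans unfolding so_def by blast

lemma so_pos: assumes h: "h \<in> AutQ" and s: "so h a b" and pa: "h a > a" shows "h b > b"
proof (rule ccontr)
  assume "\<not> h b > b"
  then have hb: "h b \<le> b" by simp
  have pb: "(h ^^ k) b \<le> b" for k
  proof (cases "h b = b")
    case True then show ?thesis using funpow_fix by (metis order_refl)
  next
    case False then show ?thesis using hb funpow_neg_le[OF h] by force
  qed
  have pa': "(h ^^ k) a \<ge> a" for k using funpow_pos_ge[OF h pa] .
  have pa'': "k > 0 \<Longrightarrow> (h ^^ k) a > a" for k using funpow_pos_gt[OF h pa] .
  consider "a < b" | "b < a" | "a = b" by linarith
  then show False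
  proof cases
    case 1
    obtain m n where mn: "(h ^^ m) b \<le> (h ^^ n) a" using s unfolding so_def hle_def by auto
    show False
    proof (cases "m \<le> n")
      case True
      have "(h ^^ m) b \<le> (h ^^ m) ((h ^^ (n - m)) a)" using mn True
        by (metis funpow_add_app le_add_diff_inverse)
      then have "b \<le> (h ^^ (n - m)) a" using funpow_le[OF h] by auto
      moreover have "(h ^^ (n - m)) a < (h ^^ (n - m)) b" using 1 funpow_less[OF h] by auto
      ultimately show False using pb[of "n - m"] by auto
    next
      case False
      have "(h ^^ n) ((h ^^ (m - n)) b) \<le> (h ^^ n) a" using mn False
        by (metis funpow_add_app le_add_diff_inverse nat_le_linear)
      then have "(h ^^ (m - n)) b \<le> a" using funpow_le[OF h] by auto
      moreover have "(h ^^ (m - n)) a < (h ^^ (m - n)) b" using 1 funpow_less[OF h] by auto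
      ultimately show False using pa'[of "m - n"] by auto
    qed
  next
    case 2
    obtain m n where mn: "(h ^^ m) a \<le> (h ^^ n) b" using s unfolding so_def hle_def by auto
    then show False using pa'[of m] pb[of n] 2 by auto
  next
    case 3 then show False using pa hb by auto
  qed
qed

lemma so_neg: assumes h: "h \<in> AutQ" and s: "so h a b" and pa: "h a < a" shows "h b < b"
proof (rule ccontr)
  assume "\<not> h b < b"
  then have hb: "h b \<ge> b" by simp
  have pb: "(h ^^ k) b \<ge> b" for k
  proof (cases "h b = b")
    case True then show ?thesis using funpow_fix by (metis order_refl)
  next
    case False then show ?thesis using hb funpow_pos_ge[OF h] by force
  qed
  have pa': "(h ^^ k) a \<le> a" for k using funpow_neg_le[OF h pa] .
  consider "a < b" | "b < a" | "a = b" by linarith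
  then show False
  proof cases
    case 2
    obtain m n where mn: "(h ^^ m) a \<le> (h ^^ n) b" using s unfolding so_def hle_def by auto
    show False
    proof (cases "n \<le> m")
      case True
      have "(h ^^ n) ((h ^^ (m - n)) a) \<le> (h ^^ n) b" using mn True
        by (metis funpow_add_app le_add_diff_inverse)
      then have "(h ^^ (m - n)) a \<le> b" using funpow_le[OF h] by auto
      moreover have "(h ^^ (m - n)) b < (h ^^ (m - n)) a" using 2 funpow_less[OF h] by auto
      ultimately show False using pb[of "m - n"] by auto
    next
      case False
      have "(h ^^ m) a \<le> (h ^^ m) ((h ^^ (n - m)) b)" using mn False
        by (metis funpow_add_app le_add_diff_inverse nat_le_linear)
      then have "a \<le> (h ^^ (n - m)) b" using funpow_le[OF h] by auto
      moreover have "(h ^^ (n - m)) b < (h ^^ (n - m)) a" using 2 funpow_less[OF h] by auto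
      ultimately show False using pa'[of "n - m"] by auto
    qed
  next
    case 1
    obtain m n where mn: "(h ^^ m) b \<le> (h ^^ n) a" using s unfolding so_def hle_def by auto
    then show False using pa'[of n] pb[of m] 1 by auto
  next
    case 3 then show False using pa hb by auto
  qed
qed

definition hs :: "(rat \<Rightarrow> rat) \<Rightarrow> rat \<Rightarrow> rat" where
  "hs h a = sgn (h a - a)"

lemma so_hs: assumes h: "h \<in> AutQ" and s: "so h a b" shows "hs h a = hs h b"
proof -
  have s': "so h b a" using s so_sym by auto
  consider "h a > a" | "h a < a" | "h a = a" by linarith
  then show ?thesis
  proof cases
    case 1 then show ?thesis using so_pos[OF h s] unfolding hs_def by (simp add: sgn_if)
  next
    case 2 then show ?thesis using so_neg[OF h s] unfolding hs_def by (simp add: sgn_if)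
  next
    case 3
    have "\<not> h b > b" using so_pos[OF h s'] 3 by auto
    moreover have "\<not> h b < b" using so_neg[OF h s'] 3 by auto
    ultimately show ?thesis using 3 unfolding hs_def by (simp add: sgn_if)
  qed
qed

lemma hs_pos: "hs h a = 1 \<longleftrightarrow> h a > a" unfolding hs_def by (simp add: sgn_if)
lemma hs_neg: "hs h a = -1 \<longleftrightarrow> h a < a" unfolding hs_def by (simp add: sgn_if)
lemma hs_zero: "hs h a = 0 \<longleftrightarrow> h a = a" unfolding hs_def by (simp add: sgn_if)

lemma orb_less1: assumes h: "h \<in> AutQ" and "\<not> so h u v" "u < v" "so h u u'" shows "u' < v"
proof (rule ccontr)
  assume "\<not> u' < v"
  then have "v \<le> u'" by simp
  then have "so h u v" using so_conv[OF h assms(4)] assms(3) by auto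
  then show False using assms by auto
qed

lemma orb_less: assumes h: "h \<in> AutQ" and "\<not> so h u v" "u < v" "so h u u'" "so h v v'"
  shows "u' < v'"
proof -
  have 1: "u' < v" using orb_less1 assms by auto
  have "\<not> so h u' v" using assms so_trans[OF h] so_sym by metis
  have "\<not> so h v u'" using \<open>\<not> so h u' v\<close> so_sym by metis
  show ?thesis
  proof (rule ccontr)
    assume "\<not> u' < v'"
    then have "v' \<le> u'" by simp
    have "so h v' v" using assms(5) so_sym by auto
    have "v' \<le> v \<or> v \<le> v'" by linarith
    then show False
    proof
      assume "v' \<le> v"
      then have "v' \<le> u'" "u' < v" using \<open>v' \<le> u'\<close> 1 by auto
      then have "so h v' u'" using so_conv[OF h \<open>so h v' v\<close>] by auto
      then show False using \<open>so h v' v\<close> \<open>\<not> so h u' v\<close> so_trans[OF h] so_sym by metis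
    next
      assume "v \<le> v'"
      then show False using \<open>v' \<le> u'\<close> 1 by auto
    qed
  qed
qed

lemma so_hs_diff: "h \<in> AutQ \<Longrightarrow> hs h a \<noteq> hs h b \<Longrightarrow> \<not> so h a b"
  using so_hs by blast

definition stretch :: "rat \<Rightarrow> rat \<Rightarrow> rat \<Rightarrow> rat \<Rightarrow> rat" where
  "stretch c u t x = (if x \<le> c then x else c + (x - c) * (t - c) / (u - c))"

lemma stretch_aut: assumes "c < u" "c < t" shows "stretch c u t \<in> AutQ"
proof (rule AutQ_I)
  have k: "(t - c) / (u - c) > 0" using assms by simp
  have st: "stretch c u t x = (if x \<le> c then x else c + (x - c) * ((t - c) / (u - c)))" for x
    unfolding stretch_def by simp
  show "strict_mono (stretch c u t)"
  proof (rule strict_monoI)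
    fix x y :: rat assume "x < y"
    show "stretch c u t x < stretch c u t y"
    proof (cases "y \<le> c")
      case True then show ?thesis using \<open>x < y\<close> unfolding st by auto
    next
      case False
      then have "(y - c) * ((t - c) / (u - c)) > 0" using k by (simp add: mult_pos_pos del: times_divide_eq_right)
      moreover have "x > c \<Longrightarrow> (x - c) * ((t - c) / (u - c)) < (y - c) * ((t - c) / (u - c))"
        using k \<open>x < y\<close> by (simp add: mult_strict_right_mono del: times_divide_eq_right)
      ultimately show ?thesis using False \<open>x < y\<close> unfolding st by auto
    qed
  qed
  show "surj (stretch c u t)"
  proof (rule surjI)
    fix y :: rat
    let ?x = "if y \<le> c then y else c + (y - c) * (u - c) / (t - c)"
    show "stretch c u t ?x = y"
    proof (cases "y \<le> c")
      case True then show ?thesis unfolding stretch_def by simp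
    next
      case False
      have "(y - c) * (u - c) / (t - c) > 0" using False assms by simp
      then have "\<not> ?x \<le> c" using False by auto
      have d: "u - c \<noteq> 0" "t - c \<noteq> 0" using assms by auto
      have "(c + (y - c) * (u - c) / (t - c) - c) * (t - c) / (u - c) = y - c"
        using d by simp
      then show ?thesis using False \<open>\<not> ?x \<le> c\<close> unfolding stretch_def by simp
    qed
  qed
qed

lemma stretch_low: "x \<le> c \<Longrightarrow> stretch c u t x = x" unfolding stretch_def by simp
lemma stretch_u: "c < u \<Longrightarrow> stretch c u t u = t" unfolding stretch_def by simp

lemma shift_aut: "(\<lambda>x. x + d) \<in> AutQ"
  by (rule AutQ_I) (auto simp: strict_mono_def intro: surjI[of _ "\<lambda>x. x - d"])

lemma extend_aut:
  assumes "finite S" "\<forall>x\<in>S. \<forall>y\<in>S. x < y \<longrightarrow> f x < f y"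
  shows "\<exists>\<rho>\<in>AutQ. \<forall>x\<in>S. \<rho> x = f x"
  using assms
proof (induction S rule: finite_linorder_max_induct)
  case empty then show ?case using AutQ_id by blast
next
  case (insert b A)
  then obtain \<rho> where r: "\<rho> \<in> AutQ" "\<forall>x\<in>A. \<rho> x = f x" by auto
  show ?case
  proof (cases "A = {}")
    case True
    then show ?thesis using shift_aut[of "f b - b"] by (intro bexI[of _ "\<lambda>x. x + (f b - b)"]) auto
  next
    case False
    let ?m = "Max A"
    have mA: "?m \<in> A" using False insert by auto
    have mb: "?m < b" using mA insert by auto
    let ?c = "f ?m"
    have cu: "?c < \<rho> b" using r mA mb AutQ_less[of \<rho>] by metis
    have ct: "?c < f b" using insert mA mb by auto
    define \<psi> where "\<psi> = stretch ?c (\<rho> b) (f b)"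
    have psi: "\<psi> \<in> AutQ" using stretch_aut[OF cu ct] \<psi>_def by simp
    have "\<forall>x\<in>insert b A. (\<psi> \<circ> \<rho>) x = f x"
    proof
      fix x assume "x \<in> insert b A"
      then consider "x = b" | "x \<in> A" by auto
      then show "(\<psi> \<circ> \<rho>) x = f x"
      proof cases
        case 1 then show ?thesis using stretch_u[OF cu] \<psi>_def by simp
      next
        case 2
        have "x \<le> ?m" using 2 insert by simp
        then have "f x \<le> ?c" using insert(4) 2 mA by (cases "x = ?m") (auto simp: less_imp_le)
        then show ?thesis using 2 r stretch_low \<psi>_def by simp
      qed
    qed
    then show ?thesis using AutQ_comp[OF psi r(1)] by blast
  qed
qed

definition conjs :: "(rat \<Rightarrow> rat) \<Rightarrow> (rat \<Rightarrow> rat) set" where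
  "conjs h = {\<rho> \<circ> h \<circ> inv \<rho> | \<rho>. \<rho> \<in> AutQ}"

lemma inv_comp_AutQ: "f \<in> AutQ \<Longrightarrow> g \<in> AutQ \<Longrightarrow> inv (f \<circ> g) = inv g \<circ> inv f"
  using AutQ_bij o_inv_distrib by blast

lemma conjs_trans: assumes "h1 \<in> conjs h" "h2 \<in> conjs h1" shows "h2 \<in> conjs h"
proof -
  obtain r1 where r1: "r1 \<in> AutQ" "h1 = r1 \<circ> h \<circ> inv r1" using assms unfolding conjs_def by auto
  obtain r2 where r2: "r2 \<in> AutQ" "h2 = r2 \<circ> h1 \<circ> inv r2" using assms unfolding conjs_def by auto
  have "h2 = (r2 \<circ> r1) \<circ> h \<circ> inv (r2 \<circ> r1)"
    using r1 r2 inv_comp_AutQ[OF r2(1) r1(1)] by (simp add: o_assoc)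
  then show ?thesis unfolding conjs_def using AutQ_comp[OF r2(1) r1(1)] by blast
qed

lemma conjs_refl: "h \<in> conjs h"
  unfolding conjs_def using AutQ_id by (auto intro!: exI[of _ id])

lemma conjs_AutQ: "h \<in> AutQ \<Longrightarrow> h' \<in> conjs h \<Longrightarrow> h' \<in> AutQ"
  unfolding conjs_def using AutQ_comp AutQ_inv by blast

definition RInv :: "(rat \<Rightarrow> rat) \<Rightarrow> rat \<Rightarrow> (rat \<times> rat) set \<Rightarrow> (nat \<Rightarrow> rat) \<Rightarrow> rat set \<Rightarrow> (rat \<Rightarrow> rat) \<Rightarrow> bool" where
  "RInv g y P w A e \<longleftrightarrow> (\<forall>x\<in>A. \<forall>z\<in>A. x < z \<longrightarrow> e x < e z) \<and>
     (\<forall>x\<in>A. so g y (e x) \<and> e x < w (card A)) \<and>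
     (\<forall>(a,a')\<in>P. a' \<in> A \<longrightarrow> e a' = g (e a)) \<and>
     (\<forall>(a,a')\<in>P. a \<in> A \<longrightarrow> a' \<notin> A \<longrightarrow> (\<forall>x\<in>A. e x < g (e a)))"

lemma realize:
  fixes g :: "rat \<Rightarrow> rat" and S :: "rat set" and P :: "(rat \<times> rat) set" and y :: rat
  assumes g: "g \<in> AutQ" and gy: "g y > y" and fS: "finite S"
    and PS: "\<forall>(a,a')\<in>P. a \<in> S \<and> a' \<in> S \<and> a < a'"
    and Pord: "\<forall>(a,a')\<in>P. \<forall>(b,b')\<in>P. a < b \<longleftrightarrow> a' < b'"
  shows "\<exists>e. (\<forall>x\<in>S. \<forall>z\<in>S. x < z \<longrightarrow> e x < e z) \<and> (\<forall>x\<in>S. so g y (e x) \<and> e x < y)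
             \<and> (\<forall>(a,a')\<in>P. e a' = g (e a))"
proof -
  define c where "c = card S"
  define w where "w k = (inv g ^^ (c - k)) y" for k
  have w_so: "so g y (w k)" for k unfolding w_def using so_inv_pow[OF g] by auto
  have pos: "so g y z \<Longrightarrow> g z > z" for z using so_pos[OF g _ gy] by auto
  have w_step: "g (w k) = w (Suc k)" if "k < c" for k
  proof -
    have "c - k = Suc (c - Suc k)" using that by auto
    then show ?thesis unfolding w_def using AutQ_f_inv[OF g] by simp
  qed
  have w_mono: "w k < w (Suc k)" if "k < c" for k using w_step[OF that] pos[OF w_so] by metis
  have w_c: "w c = y" unfolding w_def by simp
  have claim: "A \<subseteq> S \<longrightarrow> (\<forall>a\<in>S. \<forall>b\<in>A. a \<le> b \<longrightarrow> a \<in> A) \<longrightarrow> (\<exists>e. RInv g y P w A e)"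
    if fA: "finite A" for A
    using fA
  proof (induction A rule: finite_linorder_max_induct)
    case empty
    show ?case unfolding RInv_def by auto
  next
    case (insert b A)
    show ?case
    proof (intro impI)
      assume sub: "insert b A \<subseteq> S" and dc: "\<forall>a\<in>S. \<forall>b'\<in>insert b A. a \<le> b' \<longrightarrow> a \<in> insert b A"
      have bA: "b \<notin> A" using insert by auto
      have dcA: "\<forall>a\<in>S. \<forall>b'\<in>A. a \<le> b' \<longrightarrow> a \<in> A"
      proof (intro ballI impI)
        fix a b' assume "a \<in> S" "b' \<in> A" "a \<le> b'"
        then have "a \<in> insert b A" using dc by auto
        moreover have "a \<noteq> b" using \<open>b' \<in> A\<close> \<open>a \<le> b'\<close> insert(2) by fastforce
        ultimately show "a \<in> A" by auto
      qed
      obtain e where e: "RInv g y P w A e" using insert sub dcA by auto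
      have cardA: "card A < c" unfolding c_def using sub bA fS
      proof -
        have "A \<subset> S" using sub bA by auto
        then show "card A < card S" using fS psubset_card_mono by blast
      qed
      have cardA': "card (insert b A) = Suc (card A)" using bA insert(1) by simp
      have e1: "\<forall>x\<in>A. \<forall>z\<in>A. x < z \<longrightarrow> e x < e z" using e unfolding RInv_def by blast
      have e2: "\<forall>x\<in>A. so g y (e x) \<and> e x < w (card A)" using e unfolding RInv_def by blast
      have e3: "\<forall>(a,a')\<in>P. a' \<in> A \<longrightarrow> e a' = g (e a)" using e unfolding RInv_def by blast
      have e4: "\<forall>(a,a')\<in>P. a \<in> A \<longrightarrow> a' \<notin> A \<longrightarrow> (\<forall>x\<in>A. e x < g (e a))"
        using e unfolding RInv_def by blast
      have wA: "w (card A) < w (Suc (card A))" using w_mono cardA by auto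
      have Pfun: "a1 = a2" if "(a1, b1) \<in> P" "(a2, b1) \<in> P" for a1 a2 b1
      proof -
        have "\<not> a1 < a2" using Pord that by fastforce
        moreover have "\<not> a2 < a1" using Pord that by fastforce
        ultimately show ?thesis by auto
      qed
      have Pfst: "a \<in> A" if "(a, a') \<in> P" "a' \<in> insert b A" for a a'
      proof -
        have "a \<in> S" "a < a'" using PS that by auto
        then have "a \<in> insert b A" using dc that less_imp_le by blast
        moreover have "a \<noteq> b" using \<open>a < a'\<close> that insert(2) by fastforce
        ultimately show ?thesis by auto
      qed
      have abv: "\<forall>x\<in>insert b A. x < a'" if "a' \<in> S" "a' \<notin> insert b A" for a'
        using dc that by (meson not_le)
      show "\<exists>e. RInv g y P w (insert b A) e"
      proof (cases "\<exists>a. (a, b) \<in> P")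
        case True
        then obtain a where ab: "(a, b) \<in> P" by auto
        have aA: "a \<in> A" using Pfst[OF ab] by auto
        define e' where "e' = e(b := g (e a))"
        have m1: "\<forall>x\<in>A. e x < g (e a)" using e4 ab aA bA by auto
        have soa: "so g y (g (e a))" using e2 aA so_trans[OF g] so_h by blast
        have ga: "g (e a) < w (Suc (card A))"
          using e2 aA w_step[OF cardA] AutQ_less[OF g] by metis
        have "RInv g y P w (insert b A) e'"
          unfolding RInv_def
        proof (intro conjI)
          show "\<forall>x\<in>insert b A. \<forall>z\<in>insert b A. x < z \<longrightarrow> e' x < e' z"
            using e1 m1 insert(2) bA unfolding e'_def by auto
          show "\<forall>x\<in>insert b A. so g y (e' x) \<and> e' x < w (card (insert b A))"
            using e2 soa ga wA bA unfolding e'_def cardA' by auto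
          show "\<forall>(a0,a0')\<in>P. a0' \<in> insert b A \<longrightarrow> e' a0' = g (e' a0)"
          proof (clarify)
            fix a0 a0' assume p: "(a0, a0') \<in> P" "a0' \<in> insert b A"
            have a0A: "a0 \<in> A" using Pfst[OF p] .
            then have "a0 \<noteq> b" using bA by auto
            show "e' a0' = g (e' a0)"
            proof (cases "a0' = b")
              case True
              then have "a0 = a" using Pfun ab p by auto
              then show ?thesis using True \<open>a0 \<noteq> b\<close> unfolding e'_def by auto
            next
              case False
              then show ?thesis using e3 p \<open>a0 \<noteq> b\<close> unfolding e'_def by auto
            qed
          qed
          show "\<forall>(a0,a0')\<in>P. a0 \<in> insert b A \<longrightarrow> a0' \<notin> insert b A \<longrightarrow> (\<forall>x\<in>insert b A. e' x < g (e' a0))"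
          proof -
           have "e' x < g (e' a0)" if p: "(a0, a0') \<in> P" "a0 \<in> insert b A" "a0' \<notin> insert b A" "x \<in> insert b A" for a0 a0' x
           proof -
            have a0'S: "a0' \<in> S" using PS p by auto
            show ?thesis
            proof (cases "a0 = b")
              case True
              have gg: "g (e a) < g (g (e a))" using pos[OF soa] AutQ_less[OF g] by metis
              have "e' a0 = g (e a)" using True unfolding e'_def by simp
              then show ?thesis using p(4) m1 gg pos[OF soa] bA unfolding e'_def
                by (auto simp: True)
            next
              case False
              then have a0A: "a0 \<in> A" using p by auto
              have "e' a0 = e a0" using a0A bA unfolding e'_def by auto
              moreover have "x \<in> A \<Longrightarrow> e x < g (e a0)" using e4 p a0A by auto
              moreover have "g (e a) < g (e a0)"
              proof -
                have "b < a0'" using abv[OF a0'S p(3)] by auto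
                then have "a < a0" using Pord ab p(1) by auto
                then have "e a < e a0" using e1 aA a0A by auto
                then show ?thesis using AutQ_less[OF g] by metis
              qed
              ultimately show ?thesis using p(4) bA unfolding e'_def by auto
            qed
           qed
           then show ?thesis by blast
          qed
        qed
        then show ?thesis by blast
      next
        case False
        define v where "v = (if A = {} then w 0 else
            (e (Max A) + Min ({g (e a) | a a'. (a, a') \<in> P \<and> a \<in> A \<and> a' \<notin> insert b A}
                              \<union> {w (Suc (card A)), g (e (Max A))})) / 2)"
        have v_props: "so g y v \<and> v < w (Suc (card A)) \<and> (\<forall>x\<in>A. e x < v) \<and>
             (\<forall>a a'. (a, a') \<in> P \<and> a \<in> A \<and> a' \<notin> insert b A \<longrightarrow> v < g (e a))"
        proof (cases "A = {}")
          case True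
          have "0 < c" using cardA by auto
          then show ?thesis using True w_so w_mono unfolding v_def by auto
        next
          case nA: False
          define U where "U = {g (e a) | a a'. (a, a') \<in> P \<and> a \<in> A \<and> a' \<notin> insert b A}
                              \<union> {w (Suc (card A)), g (e (Max A))}"
          have fU: "finite U"
          proof -
            have "{g (e a) | a a'. (a, a') \<in> P \<and> a \<in> A \<and> a' \<notin> insert b A} \<subseteq> (\<lambda>a. g (e a)) ` A"
              by auto
            moreover have "finite ((\<lambda>a. g (e a)) ` A)" using insert(1) by simp
            ultimately have "finite {g (e a) | a a'. (a, a') \<in> P \<and> a \<in> A \<and> a' \<notin> insert b A}"
              using finite_subset by blast
            then show ?thesis unfolding U_def by simp
          qed
          have mA: "Max A \<in> A" using nA insert(1) by auto
          let ?lo = "e (Max A)"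
          have loU: "\<forall>u\<in>U. ?lo < u"
          proof
            fix u assume "u \<in> U"
            then consider "u = w (Suc (card A))" | "u = g ?lo" | "\<exists>a a'. u = g (e a) \<and> (a, a') \<in> P \<and> a \<in> A \<and> a' \<notin> insert b A"
              unfolding U_def by auto
            then show "?lo < u"
            proof cases
              case 1 then show ?thesis using e2 mA wA by force
            next
              case 2 then show ?thesis using pos e2 mA by auto
            next
              case 3
              then obtain a a' where "u = g (e a)" "(a, a') \<in> P" "a \<in> A" "a' \<notin> insert b A" by auto
              then show ?thesis using e4 mA by auto
            qed
          qed
          have MU: "Min U \<in> U" using fU unfolding U_def by (intro Min_in) auto
          have lm: "?lo < Min U" using loU MU by auto
          have vdef: "v = (?lo + Min U) / 2" unfolding v_def U_def using nA by simp
          have v1: "?lo < v" "v < Min U" using lm vdef by auto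
          have v2: "v < g ?lo" using v1 Min_le[OF fU] unfolding U_def by force
          have sov: "so g y v"
          proof -
            have "so g ?lo v" using so_conv[OF g so_h[of g ?lo]] v1 v2 by auto
            then show ?thesis using e2 mA so_trans[OF g] by blast
          qed
          have "\<forall>x\<in>A. e x < v"
          proof
            fix x assume "x \<in> A"
            then have "x \<le> Max A" using insert(1) by auto
            then have "e x \<le> ?lo" using e1 \<open>x \<in> A\<close> mA by (cases "x = Max A") (auto simp: less_imp_le)
            then show "e x < v" using v1 by auto
          qed
          moreover have "v < w (Suc (card A))" using v1 Min_le[OF fU] unfolding U_def by force
          moreover have "\<forall>a a'. (a, a') \<in> P \<and> a \<in> A \<and> a' \<notin> insert b A \<longrightarrow> v < g (e a)"
          proof (intro allI impI)
            fix a a' assume "(a, a') \<in> P \<and> a \<in> A \<and> a' \<notin> insert b A"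
            then have "g (e a) \<in> U" unfolding U_def by blast
            then show "v < g (e a)" using v1 Min_le[OF fU] by force
          qed
          ultimately show ?thesis using sov by auto
        qed
        define e' where "e' = e(b := v)"
        have "RInv g y P w (insert b A) e'"
          unfolding RInv_def
        proof (intro conjI)
          show "\<forall>x\<in>insert b A. \<forall>z\<in>insert b A. x < z \<longrightarrow> e' x < e' z"
            using e1 v_props insert(2) bA unfolding e'_def by auto
          show "\<forall>x\<in>insert b A. so g y (e' x) \<and> e' x < w (card (insert b A))"
            using e2 v_props wA bA unfolding e'_def cardA' by auto
          show "\<forall>(a0,a0')\<in>P. a0' \<in> insert b A \<longrightarrow> e' a0' = g (e' a0)"
          proof (clarify)
            fix a0 a0' assume p: "(a0, a0') \<in> P" "a0' \<in> insert b A"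
            have a0A: "a0 \<in> A" using Pfst[OF p] .
            have "a0' \<noteq> b" using False p by auto
            then show "e' a0' = g (e' a0)" using e3 p a0A bA unfolding e'_def by auto
          qed
          show "\<forall>(a0,a0')\<in>P. a0 \<in> insert b A \<longrightarrow> a0' \<notin> insert b A \<longrightarrow> (\<forall>x\<in>insert b A. e' x < g (e' a0))"
          proof -
           have "e' x < g (e' a0)" if p: "(a0, a0') \<in> P" "a0 \<in> insert b A" "a0' \<notin> insert b A" "x \<in> insert b A" for a0 a0' x
           proof -
            show ?thesis
            proof (cases "a0 = b")
              case True
              have "v < g v" using pos v_props by auto
              then show ?thesis using p(4) v_props bA True unfolding e'_def by auto
            next
              case False
              then have a0A: "a0 \<in> A" using p by auto
              have "e' a0 = e a0" using a0A bA unfolding e'_def by auto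
              moreover have "x \<in> A \<Longrightarrow> e x < g (e a0)" using e4 p a0A by auto
              moreover have "v < g (e a0)" using v_props p a0A by auto
              ultimately show ?thesis using p(4) bA unfolding e'_def by auto
            qed
           qed
           then show ?thesis by blast
          qed
        qed
        then show ?thesis by blast
      qed
    qed
  qed
  obtain e where e: "RInv g y P w S e" using claim[OF fS] by auto
  show ?thesis
  proof (intro exI conjI)
    show "\<forall>x\<in>S. \<forall>z\<in>S. x < z \<longrightarrow> e x < e z" using e unfolding RInv_def by blast
    show "\<forall>x\<in>S. so g y (e x) \<and> e x < y" using e w_c unfolding RInv_def c_def by auto
    show "\<forall>(a,a')\<in>P. e a' = g (e a)" using e PS unfolding RInv_def by auto
  qed
qed

definition sub :: "(rat \<rightharpoonup> rat) \<Rightarrow> (rat \<Rightarrow> rat) \<Rightarrow> bool" where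
  "sub p h \<longleftrightarrow> (\<forall>x\<in>dom p. p x = Some (h x))"

lemma PI_less: "p \<in> PI \<Longrightarrow> p a = Some c \<Longrightarrow> p b = Some d \<Longrightarrow> a < b \<Longrightarrow> c < d"
  unfolding PI_def by force

lemma PI_inj: "p \<in> PI \<Longrightarrow> p a = Some c \<Longrightarrow> p b = Some c \<Longrightarrow> a = b"
  using PI_less[of p a c b c] PI_less[of p b c a c] by (metis less_irrefl linorder_neqE)

lemma sub_app: "sub p h \<Longrightarrow> p x = Some c \<Longrightarrow> c = h x"
  unfolding sub_def by (metis domI option.inject)

lemma par_dom: "x \<in> dom p \<Longrightarrow> sub p h \<Longrightarrow> par p x = hs h x"
  unfolding par_def hs_def sub_def by auto

lemma par_eq: assumes "p \<in> PI" "h \<in> AutQ" "sub p h" "x \<in> D p" shows "par p x = hs h x"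
proof (cases "x \<in> dom p")
  case True then show ?thesis using par_dom assms by auto
next
  case False
  then have xr: "x \<in> ran p" using assms unfolding D_def by auto
  then obtain c where c: "p c = Some x" unfolding ran_def by auto
  have th: "(THE c. p c = Some x) = c" using c PI_inj[OF assms(1)] by (intro the_equality) auto
  have xc: "x = h c" using sub_app[OF assms(3) c] .
  have "par p x = sgn (x - c)" unfolding par_def using False xr th by simp
  also have "\<dots> = hs h c" unfolding hs_def using xc by simp
  also have "\<dots> = hs h x" using so_hs[OF assms(2) so_h[of h c]] xc by simp
  finally show ?thesis .
qed

lemma prel_so: assumes h: "h \<in> AutQ" and s: "sub r h" and pr: "prel r a b" shows "so h a b"
proof -
  have A: "so h u v" if "r u = Some c" "u \<le> v" "v \<le> c" for u v c
  proof -
    have "c = h u" using sub_app[OF s that(1)] .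
    then show ?thesis using so_conv[OF h so_h[of h u]] that by auto
  qed
  have B: "so h u v" if "r c = Some u" "c \<le> v" "v \<le> u" for u v c
  proof -
    have "u = h c" using sub_app[OF s that(1)] .
    then have "so h c u" using so_h by auto
    then have "so h c v" using so_conv[OF h] that by auto
    then show ?thesis using \<open>so h c u\<close> so_trans[OF h] so_sym by metis
  qed
  have C: "so h u v" if "r u = Some c" "c \<le> v" "v \<le> u" for u v c
  proof -
    have "c = h u" using sub_app[OF s that(1)] .
    then have "so h c u" using so_h so_sym by metis
    then have "so h c v" using so_conv[OF h] that by auto
    then show ?thesis using \<open>so h c u\<close> so_trans[OF h] so_sym by metis
  qed
  have D': "so h u v" if "r c = Some u" "u \<le> v" "v \<le> c" for u v c
  proof -
    have "u = h c" using sub_app[OF s that(1)] .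
    then have "so h u c" using so_h so_sym by metis
    then show ?thesis using so_conv[OF h] that by auto
  qed
  show ?thesis using pr unfolding prel_def
    by (elim disjE conjE exE) (auto intro: so_refl A B C D' so_sym)
qed

lemma psim_so: assumes h: "h \<in> AutQ" and s: "sub r h" and ps: "psim r a b" shows "so h a b"
  using ps unfolding psim_def
proof (induction rule: equivclp_induct)
  case base then show ?case by (rule so_refl)
next
  case (step y z)
  then have "so h y z" using prel_so[OF h s] so_sym by blast
  then show ?case using step so_trans[OF h] by blast
qed

lemma orbital_so: "h \<in> AutQ \<Longrightarrow> sub r h \<Longrightarrow> w \<in> orbital r a \<Longrightarrow> so h a w"
  unfolding orbital_def using psim_so by auto

lemma in_orbital: "a \<in> orbital p a" unfolding orbital_def psim_def by simp

lemma psim_sym: "psim p a b \<Longrightarrow> psim p b a" unfolding psim_def using equivclp_sym by metis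
lemma psim_trans: "psim p a b \<Longrightarrow> psim p b c \<Longrightarrow> psim p a c"
  unfolding psim_def using equivclp_trans by metis
lemma prel_psim: "prel p a b \<Longrightarrow> psim p a b" unfolding psim_def by blast

lemma orbital_eq: "psim p a b \<Longrightarrow> orbital p a = orbital p b"
  unfolding orbital_def using psim_sym psim_trans by blast

lemma orbital_mem: "b \<in> orbital p a \<longleftrightarrow> psim p a b" unfolding orbital_def by simp

definition consol :: "(rat \<Rightarrow> rat) \<Rightarrow> (rat \<rightharpoonup> rat) \<Rightarrow> bool" where
  "consol h p \<longleftrightarrow> (\<forall>x\<in>D p. \<forall>y\<in>D p. x < y \<and> par p x \<noteq> 0 \<and>
      (\<forall>z\<in>D p. x \<le> z \<and> z \<le> y \<longrightarrow> par p z = par p x) \<longrightarrow> so h x y)"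

lemma finite_D: "p \<in> PI \<Longrightarrow> finite (D p)"
  unfolding D_def PI_def by (auto simp: finite_ran)

locale step2 =
  fixes h :: "rat \<Rightarrow> rat" and p :: "rat \<rightharpoonup> rat"
  assumes h: "h \<in> AutQ" and p: "p \<in> PI" and s: "sub p h" and cons: "consol h p"
begin

definition Dx where "Dx x = {z \<in> D p. so h x z}"
definition tgt where "tgt x = (if hs h x < 0 then Min (Dx x) else Max (Dx x))"
definition nn where "nn x = (if hs h x < 0 then (LEAST n. (h ^^ n) x \<le> tgt x)
                              else (LEAST n. (h ^^ n) x \<ge> tgt x))"
definition T where "T = (\<Union>x\<in>D p. {(h ^^ k) x | k. k \<le> nn x})"
definition r where "r = (\<lambda>z. if z \<in> T then Some (h z) else None)"

lemma fD: "finite (D p)" using finite_D[OF p] .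

lemma Dx_fin: "finite (Dx x)" unfolding Dx_def using fD by auto

lemma Dx_self: "x \<in> D p \<Longrightarrow> x \<in> Dx x" unfolding Dx_def using so_refl by auto

lemma Dx_eq: "so h x x' \<Longrightarrow> Dx x = Dx x'"
  unfolding Dx_def using so_trans[OF h] so_sym by blast

lemma tgt_eq: "so h x x' \<Longrightarrow> tgt x = tgt x'"
  unfolding tgt_def using Dx_eq so_hs[OF h] by metis

lemma tgt_in: "x \<in> D p \<Longrightarrow> tgt x \<in> Dx x"
  unfolding tgt_def using Dx_fin Dx_self by (auto intro: Min_in Max_in)

lemma so_tgt: "x \<in> D p \<Longrightarrow> so h x (tgt x)"
  using tgt_in unfolding Dx_def by auto

lemma ex_up: assumes "x \<in> D p" "hs h x \<ge> 0" shows "\<exists>n. (h ^^ n) x \<ge> tgt x"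
proof -
  let ?M = "tgt x"
  obtain m n where mn: "(h ^^ m) ?M \<le> (h ^^ n) x"
    using so_tgt[OF assms(1)] unfolding so_def hle_def by auto
  have "hs h ?M \<ge> 0" using assms so_hs[OF h so_tgt[OF assms(1)]] by simp
  then have "h ?M > ?M \<or> h ?M = ?M" unfolding hs_def by (auto simp: sgn_if split: if_splits)
  then have "?M \<le> (h ^^ m) ?M"
  proof
    assume "h ?M > ?M" then show ?thesis using funpow_pos_ge[OF h] by blast
  next
    assume "h ?M = ?M" then show ?thesis using funpow_fix[of h ?M m] by simp
  qed
  then show ?thesis using mn order.trans by blast
qed

lemma ex_down: assumes "x \<in> D p" "hs h x < 0" shows "\<exists>n. (h ^^ n) x \<le> tgt x"
proof -
  let ?M = "tgt x"
  obtain m n where mn: "(h ^^ m) x \<le> (h ^^ n) ?M"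
    using so_tgt[OF assms(1)] unfolding so_def hle_def by auto
  have "hs h ?M < 0" using assms so_hs[OF h so_tgt[OF assms(1)]] by simp
  then have "(h ^^ n) ?M \<le> ?M" using funpow_neg_le[OF h] hs_def by (simp add: sgn_if split: if_splits)
  then show ?thesis using mn order.trans by blast
qed

lemma nn_up: assumes "x \<in> D p" "hs h x \<ge> 0"
  shows "(h ^^ nn x) x \<ge> tgt x" "k < nn x \<Longrightarrow> (h ^^ k) x < tgt x"
proof -
  have e: "nn x = (LEAST n. (h ^^ n) x \<ge> tgt x)" unfolding nn_def using assms by auto
  show "(h ^^ nn x) x \<ge> tgt x" unfolding e using ex_up[OF assms] by (rule LeastI_ex)
  show "k < nn x \<Longrightarrow> (h ^^ k) x < tgt x" unfolding e using not_less_Least by force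
qed

lemma nn_down: assumes "x \<in> D p" "hs h x < 0"
  shows "(h ^^ nn x) x \<le> tgt x" "k < nn x \<Longrightarrow> (h ^^ k) x > tgt x"
proof -
  have e: "nn x = (LEAST n. (h ^^ n) x \<le> tgt x)" unfolding nn_def using assms by auto
  show "(h ^^ nn x) x \<le> tgt x" unfolding e using ex_down[OF assms] by (rule LeastI_ex)
  show "k < nn x \<Longrightarrow> (h ^^ k) x > tgt x" unfolding e using not_less_Least by force
qed

lemma fT: "finite T"
  unfolding T_def using fD by auto

lemma dom_r: "dom r = T" unfolding r_def dom_def by auto

lemma sub_r: "sub r h" unfolding sub_def r_def by (auto split: if_splits)

lemma r_PI: "r \<in> PI"
  unfolding PI_def using fT dom_r AutQ_less[OF h] unfolding r_def by (auto split: if_splits)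

lemma Dp_T: "x \<in> D p \<Longrightarrow> x \<in> T" unfolding T_def by (auto intro!: bexI[of _ x] exI[of _ 0])

lemma p_le_r: "p \<subseteq>\<^sub>m r"
  unfolding map_le_def
proof
  fix x assume "x \<in> dom p"
  then have "x \<in> T" using Dp_T unfolding D_def by auto
  then show "p x = r x" using s \<open>x \<in> dom p\<close> unfolding r_def sub_def by auto
qed

lemma Dp_Dr: "x \<in> D p \<Longrightarrow> x \<in> D r"
proof -
  assume x: "x \<in> D p"
  show "x \<in> D r"
  proof (cases "x \<in> dom p")
    case True then show ?thesis using Dp_T dom_r x unfolding D_def by auto
  next
    case False
    then obtain c where c: "p c = Some x" using x unfolding D_def ran_def by auto
    then have "c \<in> T" using Dp_T unfolding D_def by (auto intro: domI)
    moreover have "x = h c" using sub_app[OF s c] .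
    ultimately have "r c = Some x" unfolding r_def by auto
    then show ?thesis unfolding D_def by (auto intro: ranI)
  qed
qed

lemma Dr_form: assumes "z \<in> D r" shows "\<exists>x\<in>D p. \<exists>k\<le>Suc (nn x). z = (h ^^ k) x"
proof (cases "z \<in> T")
  case True then show ?thesis unfolding T_def using le_SucI by blast
next
  case False
  then have "z \<in> ran r" using assms dom_r unfolding D_def by auto
  then obtain t where t: "r t = Some z" unfolding ran_def by auto
  then have "t \<in> T" "z = h t" unfolding r_def by (auto split: if_splits)
  then obtain x k where "x \<in> D p" "k \<le> nn x" "t = (h ^^ k) x" unfolding T_def by auto
  then show ?thesis using \<open>z = h t\<close> by (intro bexI[of _ x] exI[of _ "Suc k"]) auto
qed

lemma end_form: assumes "z \<in> D r" "r z = None" shows "\<exists>x\<in>D p. z = (h ^^ Suc (nn x)) x"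
proof -
  have "z \<notin> T" using assms dom_r by auto
  then have "z \<in> ran r" using assms dom_r unfolding D_def by auto
  then obtain t where t: "r t = Some z" unfolding ran_def by auto
  then have "t \<in> T" "z = h t" unfolding r_def by (auto split: if_splits)
  then obtain x k where xk: "x \<in> D p" "k \<le> nn x" "t = (h ^^ k) x" unfolding T_def by auto
  have "k = nn x"
  proof (rule ccontr)
    assume "k \<noteq> nn x"
    then have "Suc k \<le> nn x" using xk by auto
    moreover have "z = (h ^^ Suc k) x" using xk \<open>z = h t\<close> by simp
    ultimately have "z \<in> T" using xk unfolding T_def by blast
    then show False using \<open>z \<notin> T\<close> by auto
  qed
  then show ?thesis using xk \<open>z = h t\<close> by auto
qed

lemma start_form: assumes "z \<in> D r" "z \<notin> ran r" shows "z \<in> D p"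
proof -
  have "z \<in> T" using assms dom_r unfolding D_def by auto
  then obtain x k where xk: "x \<in> D p" "k \<le> nn x" "z = (h ^^ k) x" unfolding T_def by auto
  show ?thesis
  proof (cases k)
    case 0 then show ?thesis using xk by auto
  next
    case (Suc j)
    have "j \<le> nn x" using xk Suc by auto
    then have "(h ^^ j) x \<in> T" using xk unfolding T_def by blast
    then have "r ((h ^^ j) x) = Some z" using xk Suc unfolding r_def by auto
    then show ?thesis using assms by (auto intro: ranI)
  qed
qed

lemma par_r: "z \<in> D r \<Longrightarrow> par r z = hs h z"
  using par_eq[OF r_PI h sub_r] .

lemma chain_step: assumes "x \<in> D p" "hs h x \<noteq> 0" "k \<le> nn x"
  shows "psim r ((h ^^ k) x) ((h ^^ Suc k) x)"
proof -
  define y where "y = (h ^^ k) x"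
  have inT: "y \<in> T" using assms unfolding T_def y_def by auto
  have rr: "r y = Some (h y)" using inT unfolding r_def by simp
  have hy: "hs h y = hs h x" using so_hs[OF h so_pow] y_def by metis
  have py: "par r y = hs h x" using par_dom[OF _ sub_r] inT dom_r hy by metis
  have "prel r y (h y)"
  proof (cases "hs h x = 1")
    case True
    then have "h y > y" using hy hs_pos by metis
    then show ?thesis using True py rr unfolding prel_def by auto
  next
    case False
    then have "hs h x = -1" using assms(2) unfolding hs_def by (auto simp: sgn_if split: if_splits)
    then have "h y < y" using hy hs_neg by metis
    then show ?thesis using \<open>hs h x = -1\<close> py rr unfolding prel_def by auto
  qed
  then show ?thesis unfolding y_def by (simp add: prel_psim)
qed

lemma chain_psim: assumes "x \<in> D p" "hs h x \<noteq> 0" "k \<le> Suc (nn x)"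
  shows "psim r x ((h ^^ k) x)"
  using assms(3)
proof (induction k)
  case 0 then show ?case unfolding psim_def by simp
next
  case (Suc k)
  then show ?case using chain_step[OF assms(1,2), of k] psim_trans by auto
qed

lemma chain_tgt: assumes "x \<in> D p" "hs h x \<noteq> 0" shows "psim r x (tgt x)"
proof (cases "nn x")
  case 0
  have "x \<in> Dx x" using Dx_self assms by auto
  have "tgt x = x"
  proof (cases "hs h x < 0")
    case True
    have "x \<le> tgt x" using nn_down[OF assms(1) True] 0 by simp
    moreover have "tgt x \<le> x" unfolding tgt_def using True Dx_fin \<open>x \<in> Dx x\<close> by simp
    ultimately show ?thesis by simp
  next
    case False
    have "x \<ge> tgt x" using nn_up[OF assms(1)] False 0 by simp
    moreover have "tgt x \<ge> x" unfolding tgt_def using False Dx_fin \<open>x \<in> Dx x\<close> by simp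
    ultimately show ?thesis by simp
  qed
  then show ?thesis unfolding psim_def by simp
next
  case (Suc j)
  have "j \<le> nn x" using Suc by auto
  then have inT: "(h ^^ j) x \<in> T" using assms unfolding T_def by blast
  have rr: "r ((h ^^ j) x) = Some ((h ^^ Suc j) x)" using inT unfolding r_def by simp
  have pj: "par r ((h ^^ j) x) = hs h x"
    using par_dom[OF _ sub_r] inT dom_r so_hs[OF h so_pow] by metis
  have "prel r ((h ^^ j) x) (tgt x)"
  proof (cases "hs h x < 0")
    case True
    have "(h ^^ Suc j) x \<le> tgt x" "(h ^^ j) x > tgt x" using nn_down[OF assms(1) True] Suc by auto
    moreover have "par r ((h ^^ j) x) = -1" using pj True unfolding hs_def by (simp add: sgn_if split: if_splits)
    ultimately show ?thesis using rr unfolding prel_def by auto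
  next
    case False
    have "(h ^^ Suc j) x \<ge> tgt x" "(h ^^ j) x < tgt x" using nn_up[OF assms(1)] False Suc by auto
    moreover have "par r ((h ^^ j) x) = 1" using pj False assms(2) unfolding hs_def by (simp add: sgn_if split: if_splits)
    ultimately show ?thesis using rr unfolding prel_def by auto
  qed
  then show ?thesis using chain_psim[OF assms, of j] Suc prel_psim psim_trans by auto
qed

lemma Dr_tgt: assumes "z \<in> D r" "hs h z \<noteq> 0"
  shows "\<exists>x\<in>D p. so h x z \<and> psim r z (tgt x)"
proof -
  obtain x k where xk: "x \<in> D p" "k \<le> Suc (nn x)" "z = (h ^^ k) x" using Dr_form[OF assms(1)] by auto
  have sxz: "so h x z" using xk so_pow by auto
  then have "hs h x \<noteq> 0" using assms so_hs[OF h] by metis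
  then have "psim r x z" "psim r x (tgt x)" using chain_psim chain_tgt xk by auto
  then show ?thesis using sxz xk psim_sym psim_trans by blast
qed

end

context step2 begin
lemma colored_D: "I \<in> colored r \<Longrightarrow> \<exists>a\<in>D r. I = orbital r a"
  unfolding colored_def by auto
lemma no_bad: assumes op: "orb_par r I sg" and sg: "sg \<in> {1, -1}" and a: "a \<in> I" and a': "a' \<in> I"
  and bp: "bad_pair r a a'" shows False
proof -
  obtain i0 where i0: "i0 \<in> D r" "I = orbital r i0" using op colored_D unfolding orb_par_def by auto
  have aD: "a \<in> D r" "a' \<in> D r" "a < a'" using bp unfolding bad_pair_def by blast+
  have "psim r i0 a" "psim r i0 a'" using a a' i0 orbital_mem by auto
  then have paa: "psim r a a'" using psim_sym psim_trans by blast
  have Ia: "I = orbital r a" using i0 \<open>psim r i0 a\<close> orbital_eq by blast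
  have soaa: "so h a a'" using psim_so[OF h sub_r paa] .
  have btw: "between r a a' I" unfolding between_def using op Ia unfolding orb_par_def by blast
  have parI: "orb_par r I t \<Longrightarrow> par r a = t" for t using a aD unfolding orb_par_def by auto
  have disj: "((\<forall>K. between r a a' K \<longrightarrow> orb_par r K 1) \<and> r a = None \<and> a' \<notin> ran r) \<or>
      ((\<forall>K. between r a a' K \<longrightarrow> orb_par r K (-1)) \<and> r a' = None \<and> a \<notin> ran r)"
    using bp unfolding bad_pair_def by (rule conjunct2[OF conjunct2[OF conjunct2]])
  consider
    (up) "orb_par r I 1" "r a = None" "a' \<notin> ran r" |
    (dn) "orb_par r I (-1)" "r a' = None" "a \<notin> ran r"
  proof -
    from disj show thesis
    proof
      assume u: "(\<forall>K. between r a a' K \<longrightarrow> orb_par r K 1) \<and> r a = None \<and> a' \<notin> ran r"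
      then have "orb_par r I 1" using btw by blast
      moreover have "r a = None" "a' \<notin> ran r" using u by simp_all
      ultimately show thesis by (rule that(1))
    next
      assume u: "(\<forall>K. between r a a' K \<longrightarrow> orb_par r K (-1)) \<and> r a' = None \<and> a \<notin> ran r"
      then have "orb_par r I (-1)" using btw by blast
      moreover have "r a' = None" "a \<notin> ran r" using u by simp_all
      ultimately show thesis by (rule that(2))
    qed
  qed
  then show False
  proof cases
    case up
    obtain x where x: "x \<in> D p" "a = (h ^^ Suc (nn x)) x" using end_form aD up by auto
    have x'D: "a' \<in> D p" using start_form aD up by auto
    have "hs h a = 1" using parI[OF up(1)] par_r aD by auto
    have sxa: "so h x a" using x so_pow by metis
    then have hx: "hs h x = 1" using \<open>hs h a = 1\<close> so_hs[OF h] by metis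
    have "so h x a'" using sxa soaa so_trans[OF h] by blast
    then have "a' \<in> Dx x" unfolding Dx_def using x'D by auto
    then have "a' \<le> tgt x" unfolding tgt_def using hx Dx_fin by auto
    also have "\<dots> \<le> (h ^^ nn x) x" using nn_up[OF x(1)] hx by auto
    also have "\<dots> < h ((h ^^ nn x) x)"
    proof -
      have "hs h ((h ^^ nn x) x) = 1" using hx so_hs[OF h so_pow] by metis
      then show ?thesis using hs_pos by metis
    qed
    also have "\<dots> = a" using x by simp
    finally show False using aD by auto
  next
    case dn
    obtain x where x: "x \<in> D p" "a' = (h ^^ Suc (nn x)) x" using end_form aD dn by auto
    have xD: "a \<in> D p" using start_form aD dn by auto
    have "hs h a = -1" using parI[OF dn(1)] par_r aD by auto
    have sxa: "so h x a'" using x so_pow by metis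
    have sxa2: "so h x a" using sxa soaa so_trans[OF h] so_sym by metis
    then have hx: "hs h x = -1" using \<open>hs h a = -1\<close> so_hs[OF h] by metis
    have "a \<in> Dx x" unfolding Dx_def using xD sxa2 by auto
    then have "tgt x \<le> a" unfolding tgt_def using hx Dx_fin by auto
    moreover have "(h ^^ nn x) x \<le> tgt x" using nn_down[OF x(1)] hx by auto
    moreover have "h ((h ^^ nn x) x) < (h ^^ nn x) x"
    proof -
      have "hs h ((h ^^ nn x) x) = -1" using hx so_hs[OF h so_pow] by metis
      then show ?thesis using hs_neg by metis
    qed
    moreover have "h ((h ^^ nn x) x) = a'" using x by simp
    ultimately show False using aD by auto
  qed
qed

lemma orbital_ne: "I \<in> colored r \<Longrightarrow> I \<noteq> {}"
  using colored_D in_orbital by blast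

lemma no_neigh: assumes oI: "orb_par r I sg" and oJ: "orb_par r J sg" and sg: "sg \<in> {1, -1}"
  and nb: "neighbours r I J" shows False
proof -
  obtain a0 where a0: "a0 \<in> D r" "I = orbital r a0" using oI colored_D unfolding orb_par_def by auto
  obtain b0 where b0: "b0 \<in> D r" "J = orbital r b0" using oJ colored_D unfolding orb_par_def by auto
  have a0I: "a0 \<in> I" and b0J: "b0 \<in> J" using a0 b0 in_orbital by auto
  have ab: "a0 < b0" using nb a0I b0J unfolding neighbours_def oprec_def by auto
  have pa: "par r a0 = sg" using oI a0I a0 unfolding orb_par_def by auto
  have pb: "par r b0 = sg" using oJ b0J b0 unfolding orb_par_def by auto
  have ha: "hs h a0 = sg" and hb: "hs h b0 = sg" using pa pb par_r a0 b0 by auto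
  have sg0: "sg \<noteq> 0" using sg by auto
  obtain xa where xa: "xa \<in> D p" "so h xa a0" "psim r a0 (tgt xa)" using Dr_tgt[OF a0(1)] ha sg0 by auto
  obtain xb where xb: "xb \<in> D p" "so h xb b0" "psim r b0 (tgt xb)" using Dr_tgt[OF b0(1)] hb sg0 by auto
  show False
  proof (cases "so h a0 b0")
    case True
    have "so h xa xb" using True xa xb so_trans[OF h] so_sym by metis
    then have "tgt xa = tgt xb" using tgt_eq by auto
    then have "psim r a0 b0" using xa xb psim_sym psim_trans by metis
    then have "b0 \<in> I" using a0 orbital_mem by auto
    then show False using nb b0J unfolding neighbours_def oprec_def by auto
  next
    case False
    have sa: "so h a0 xa" and sb: "so h b0 xb" using xa xb so_sym by auto
    have xab: "xa < xb" using orb_less[OF h False ab sa sb] .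
    have hxa: "hs h xa = sg" using ha xa so_hs[OF h] by metis
    have hxb: "hs h xb = sg" using hb xb so_hs[OF h] by metis
    have nso: "\<not> so h xa xb" using False sa sb so_trans[OF h] so_sym by metis
    have ppa: "par p xa = sg" using par_eq[OF p h s xa(1)] hxa by simp
    obtain z where z: "z \<in> D p" "xa \<le> z" "z \<le> xb" "par p z \<noteq> par p xa"
      using cons xa(1) xb(1) xab nso ppa sg0 unfolding consol_def by blast
    have hz: "hs h z \<noteq> sg" using z par_eq[OF p h s] ppa by auto
    have nz1: "\<not> so h xa z" using hz hxa so_hs[OF h] by metis
    have nz2: "\<not> so h z xb" using hz hxb so_hs[OF h] by metis
    have zxa: "xa < z" using z(2) nz1 so_refl by (metis order_le_less)
    have zxb: "z < xb" using z(3) nz2 so_refl by (metis order_le_less)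
    have zD: "z \<in> D r" using Dp_Dr z by auto
    define K where "K = orbital r z"
    have Kc: "K \<in> colored r" unfolding K_def colored_def using zD by auto
    have "oprec I K" unfolding oprec_def
    proof (intro ballI)
      fix w v assume "w \<in> I" "v \<in> K"
      have "so h a0 w" using orbital_so[OF h sub_r] \<open>w \<in> I\<close> a0 by auto
      then have "so h xa w" using xa so_trans[OF h] by blast
      moreover have "so h z v" using orbital_so[OF h sub_r] \<open>v \<in> K\<close> K_def by auto
      ultimately show "w < v" using orb_less[OF h nz1 zxa] by auto
    qed
    moreover have "oprec K J" unfolding oprec_def
    proof (intro ballI)
      fix w v assume "w \<in> K" "v \<in> J"
      have "so h b0 v" using orbital_so[OF h sub_r] \<open>v \<in> J\<close> b0 by auto
      then have "so h xb v" using xb so_trans[OF h] by blast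
      moreover have "so h z w" using orbital_so[OF h sub_r] \<open>w \<in> K\<close> K_def by auto
      ultimately show "w < v" using orb_less[OF h nz2 zxb] by auto
    qed
    ultimately show False using nb Kc unfolding neighbours_def by auto
  qed
qed

lemma r_gd: "r \<in> P_gd"
proof -
  have c1: "\<forall>I sg. orb_par r I sg \<and> sg \<in> {1, -1} \<longrightarrow> \<not> (\<exists>a\<in>I. \<exists>a'\<in>I. bad_pair r a a')"
    using no_bad by blast
  have c2: "\<forall>I J sg t. orb_par r I sg \<and> orb_par r J t \<and> sg \<in> {1, -1} \<and> t \<in> {1, -1} \<and>
        (neighbours r I J \<or> neighbours r J I) \<longrightarrow> sg \<noteq> t"
    using no_neigh by blast
  show ?thesis unfolding P_gd_def using r_PI c1 c2 by blast
qed

end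

lemma step2_main: assumes "h \<in> AutQ" "p \<in> PI" "sub p h" "consol h p"
  shows "\<exists>q\<in>P_gd. p \<subseteq>\<^sub>m q \<and> sub q h"
proof -
  interpret step2 h p using assms by unfold_locales
  show ?thesis using r_gd p_le_r sub_r by blast
qed

lemma hle_inv1: assumes h: "h \<in> AutQ" and "hle (inv h) a b" shows "hle h a b"
proof -
  obtain m n where mn: "(inv h ^^ m) a \<le> (inv h ^^ n) b" using assms unfolding hle_def by auto
  have "(h ^^ (n + m)) ((inv h ^^ m) a) \<le> (h ^^ (n + m)) ((inv h ^^ n) b)"
    using mn funpow_le[OF h] by blast
  moreover have "(h ^^ (n + m)) ((inv h ^^ m) a) = (h ^^ n) a"
    by (simp add: funpow_add_app funpow_inv_cancel[OF h])
  moreover have "(h ^^ (n + m)) ((inv h ^^ n) b) = (h ^^ m) b"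
    by (metis add.commute funpow_add_app funpow_inv_cancel[OF h])
  ultimately show ?thesis unfolding hle_def by auto
qed

lemma hle_inv2: assumes h: "h \<in> AutQ" and "hle h a b" shows "hle (inv h) a b"
proof -
  obtain m n where mn: "(h ^^ m) a \<le> (h ^^ n) b" using assms unfolding hle_def by auto
  have hi: "inv h \<in> AutQ" using AutQ_inv[OF h] .
  have "(inv h ^^ (n + m)) ((h ^^ m) a) \<le> (inv h ^^ (n + m)) ((h ^^ n) b)"
    using mn funpow_le[OF hi] by blast
  moreover have "(inv h ^^ (n + m)) ((h ^^ m) a) = (inv h ^^ n) a"
    by (simp add: funpow_add_app funpow_inv_cancel2[OF h])
  moreover have "(inv h ^^ (n + m)) ((h ^^ n) b) = (inv h ^^ m) b"
    by (metis add.commute funpow_add_app funpow_inv_cancel2[OF h])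
  ultimately show ?thesis unfolding hle_def by auto
qed

lemma so_inv: "h \<in> AutQ \<Longrightarrow> so (inv h) a b = so h a b"
  unfolding so_def using hle_inv1 hle_inv2 by blast

lemma conj_pow: assumes "\<rho> \<in> AutQ" shows "((inv \<rho> \<circ> h \<circ> \<rho>) ^^ n) x = inv \<rho> ((h ^^ n) (\<rho> x))"
proof (induction n arbitrary: x)
  case 0 then show ?case using AutQ_inv_f[OF assms] by simp
next
  case (Suc n)
  then show ?case using AutQ_f_inv[OF assms] by simp
qed

lemma so_conj: assumes r: "\<rho> \<in> AutQ" and h: "h \<in> AutQ"
  shows "so (inv \<rho> \<circ> h \<circ> \<rho>) a b = so h (\<rho> a) (\<rho> b)"
proof -
  have ir: "inv \<rho> \<in> AutQ" using AutQ_inv[OF r] .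
  have "hle (inv \<rho> \<circ> h \<circ> \<rho>) u v = hle h (\<rho> u) (\<rho> v)" for u v
    unfolding hle_def conj_pow[OF r] AutQ_le[OF ir] by simp
  then show ?thesis unfolding so_def by simp
qed

definition bad_br :: "(rat \<Rightarrow> rat) \<Rightarrow> (rat \<rightharpoonup> rat) \<Rightarrow> rat \<Rightarrow> rat \<Rightarrow> bool" where
  "bad_br h p x y \<longleftrightarrow> x \<in> D p \<and> y \<in> D p \<and> x < y \<and> par p x \<noteq> 0 \<and>
     (\<forall>z\<in>D p. x \<le> z \<and> z \<le> y \<longrightarrow> par p z = par p x) \<and> \<not> so h x y"

definition BB :: "(rat \<Rightarrow> rat) \<Rightarrow> (rat \<rightharpoonup> rat) \<Rightarrow> (rat \<times> rat) set" where
  "BB h p = {(x, y). bad_br h p x y}"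

lemma BB_fin: "p \<in> PI \<Longrightarrow> finite (BB h p)"
proof -
  assume "p \<in> PI"
  then have "finite (D p \<times> D p)" using finite_D by auto
  moreover have "BB h p \<subseteq> D p \<times> D p" unfolding BB_def bad_br_def by auto
  ultimately show ?thesis using finite_subset by auto
qed

lemma consol_BB: "BB h p = {} \<Longrightarrow> consol h p"
  unfolding consol_def BB_def bad_br_def by blast

lemma bad_brI: "x \<in> D p \<Longrightarrow> y \<in> D p \<Longrightarrow> x < y \<Longrightarrow> par p x \<noteq> 0 \<Longrightarrow>
   (\<forall>z\<in>D p. x \<le> z \<and> z \<le> y \<longrightarrow> par p z = par p x) \<Longrightarrow> \<not> so h x y \<Longrightarrow> bad_br h p x y"
  unfolding bad_br_def by (intro conjI) assumption+

lemma bad_consec: assumes p: "p \<in> PI" and h: "h \<in> AutQ" and ne: "BB h p \<noteq> {}"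
  shows "\<exists>x y. bad_br h p x y \<and> (\<forall>z\<in>D p. \<not> (x < z \<and> z < y))"
proof -
  let ?f = "\<lambda>(a, b). b - a"
  have fin: "finite (?f ` BB h p)" using BB_fin[OF p] by auto
  let ?m = "Min (?f ` BB h p)"
  have "?m \<in> ?f ` BB h p" using fin ne by (intro Min_in) auto
  then obtain x y where xy: "(x, y) \<in> BB h p" "y - x = ?m" by auto
  have minp: "y - x \<le> b - a" if "bad_br h p a b" for a b
  proof -
    have "(a, b) \<in> BB h p" using that unfolding BB_def by auto
    then have "?f (a, b) \<in> ?f ` BB h p" by (rule imageI)
    then have "?m \<le> b - a" using fin Min_le by (metis (no_types, lifting) case_prod_conv)
    then show ?thesis using xy by auto
  qed
  have bxy: "bad_br h p x y" using xy unfolding BB_def by auto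
  have bx: "x \<in> D p" "y \<in> D p" "x < y" "par p x \<noteq> 0" "\<not> so h x y"
    and ball: "\<forall>w\<in>D p. x \<le> w \<and> w \<le> y \<longrightarrow> par p w = par p x"
    using bxy unfolding bad_br_def by blast+
  have "\<forall>z\<in>D p. \<not> (x < z \<and> z < y)"
  proof (intro ballI notI)
    fix z assume zD: "z \<in> D p" and "x < z \<and> z < y"
    then have xz: "x < z" "z < y" by auto
    have "x \<le> z \<and> z \<le> y" using xz by auto
    from ball[rule_format, OF zD this] have pz: "par p z = par p x" .
    show False
    proof (cases "so h x z")
      case False
      have "\<forall>w\<in>D p. x \<le> w \<and> w \<le> z \<longrightarrow> par p w = par p x"
      proof (intro ballI impI)
        fix w assume "w \<in> D p" "x \<le> w \<and> w \<le> z"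
        then have "x \<le> w \<and> w \<le> y" using xz by auto
        from ball[rule_format, OF \<open>w \<in> D p\<close> this] show "par p w = par p x" .
      qed
      from bad_brI[OF bx(1) zD xz(1) bx(4) this False] have "bad_br h p x z" .
      from minp[OF this] show False using xz by linarith
    next
      case True
      then have "\<not> so h z y" using bx so_trans[OF h] by blast
      moreover have "\<forall>w\<in>D p. z \<le> w \<and> w \<le> y \<longrightarrow> par p w = par p z"
      proof (intro ballI impI)
        fix w assume "w \<in> D p" "z \<le> w \<and> w \<le> y"
        then have "x \<le> w \<and> w \<le> y" using xz by auto
        from ball[rule_format, OF \<open>w \<in> D p\<close> this] show "par p w = par p z" using pz by simp
      qed
      moreover have "par p z \<noteq> 0" using pz bx(4) by simp
      ultimately have "bad_br h p z y" using bad_brI[OF zD bx(2) xz(2)] by blast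
      from minp[OF this] show False using xz by linarith
    qed
  qed
  then show ?thesis using bxy by blast
qed

locale fix1 =
  fixes h :: "rat \<Rightarrow> rat" and p :: "rat \<rightharpoonup> rat" and x0 y0 :: rat
  assumes h: "h \<in> AutQ" and p: "p \<in> PI" and s: "sub p h" and bad: "bad_br h p x0 y0"
    and consec: "\<forall>z\<in>D p. \<not> (x0 < z \<and> z < y0)"
begin

definition sg where "sg = par p x0"
definition L where "L = {z \<in> D p. z \<le> x0 \<and> (\<forall>w\<in>D p. z \<le> w \<and> w \<le> x0 \<longrightarrow> par p w = sg)}"

lemma bx: "x0 \<in> D p" "y0 \<in> D p" "x0 < y0" "par p x0 \<noteq> 0" "\<not> so h x0 y0"
  and ball: "\<forall>w\<in>D p. x0 \<le> w \<and> w \<le> y0 \<longrightarrow> par p w = par p x0"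
  using bad unfolding bad_br_def by blast+

lemma hsD: "z \<in> D p \<Longrightarrow> hs h z = par p z" using par_eq[OF p h s] by simp

lemma sg01: "sg = 1 \<or> sg = -1"
proof -
  have "hs h x0 \<noteq> 0" using bx hsD sg_def by simp
  then show ?thesis using hsD[OF bx(1)] unfolding sg_def hs_def by (auto simp: sgn_if split: if_splits)
qed

lemma hs_y0: "hs h y0 = sg"
proof -
  have "x0 \<le> y0 \<and> y0 \<le> y0" using bx by auto
  from ball[rule_format, OF bx(2) this] show ?thesis using hsD[OF bx(2)] sg_def by simp
qed

lemma above: "z \<in> D p \<Longrightarrow> x0 < z \<Longrightarrow> y0 \<le> z" using consec by (meson not_le)

lemma L_D: "z \<in> L \<Longrightarrow> z \<in> D p \<and> z \<le> x0" unfolding L_def by blast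

lemma L_par: assumes "z \<in> L" shows "hs h z = sg"
proof -
  have zz: "z \<in> D p" "z \<le> x0" "\<forall>w\<in>D p. z \<le> w \<and> w \<le> x0 \<longrightarrow> par p w = sg" using assms unfolding L_def by blast+
  have "z \<le> z \<and> z \<le> x0" using zz by auto
  from zz(3)[rule_format, OF zz(1) this] show ?thesis using hsD[OF zz(1)] by simp
qed

lemma x0L: "x0 \<in> L"
proof -
  have "\<forall>w\<in>D p. x0 \<le> w \<and> w \<le> x0 \<longrightarrow> par p w = sg"
  proof (intro ballI impI)
    fix w assume "w \<in> D p" "x0 \<le> w \<and> w \<le> x0"
    then have "w = x0" by auto
    then show "par p w = sg" using sg_def by simp
  qed
  then show ?thesis unfolding L_def using bx by blast
qed

lemma L_down: assumes "z \<in> L" "u \<in> D p" "z \<le> u" "u \<le> x0" shows "u \<in> L"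
proof -
  have zz: "\<forall>w\<in>D p. z \<le> w \<and> w \<le> x0 \<longrightarrow> par p w = sg" using assms unfolding L_def by blast
  have "\<forall>w\<in>D p. u \<le> w \<and> w \<le> x0 \<longrightarrow> par p w = sg"
  proof (intro ballI impI)
    fix w assume "w \<in> D p" "u \<le> w \<and> w \<le> x0"
    then have "z \<le> w \<and> w \<le> x0" using assms by auto
    from zz[rule_format, OF \<open>w \<in> D p\<close> this] show "par p w = sg" .
  qed
  then show ?thesis unfolding L_def using assms by blast
qed

lemma L_upto: assumes "z \<in> L" "u \<in> D p" "z \<le> u" "u \<le> x0" shows "par p u = sg"
  using L_down[OF assms] L_par hsD assms(2) by metis

lemma ran_D: "p c = Some d \<Longrightarrow> d \<in> D p \<and> c \<in> D p" unfolding D_def by (auto intro: ranI)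

lemma L_fwd: assumes zL: "z \<in> L" and zd: "z \<in> dom p" shows "h z \<in> L"
proof -
  have pz: "p z = Some (h z)" using s zd unfolding sub_def by auto
  have hzD: "h z \<in> D p" using ran_D[OF pz] by auto
  have zD: "z \<in> D p" "z \<le> x0" using L_D[OF zL] by auto
  have hz: "hs h z = sg" using L_par[OF zL] .
  show ?thesis
  proof (cases "sg = 1")
    case True
    then have zlt: "z < h z" using hz hs_pos by metis
    have "h z \<le> x0"
    proof (rule ccontr)
      assume "\<not> h z \<le> x0"
      then have "y0 \<le> h z" using above hzD by auto
      have "so h z x0" using so_conv[OF h so_h[of h z]] zD \<open>\<not> h z \<le> x0\<close> by auto
      moreover have "so h z y0" using so_conv[OF h so_h[of h z]] zD bx(3) \<open>y0 \<le> h z\<close> by auto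
      ultimately show False using bx(5) so_trans[OF h] so_sym by metis
    qed
    then show ?thesis using L_down[OF zL hzD] zlt by auto
  next
    case False
    then have "sg = -1" using sg01 by auto
    then have zlt: "h z < z" using hz hs_neg by metis
    have "\<forall>w\<in>D p. h z \<le> w \<and> w \<le> x0 \<longrightarrow> par p w = sg"
    proof (intro ballI impI)
      fix w assume wD: "w \<in> D p" and w: "h z \<le> w \<and> w \<le> x0"
      show "par p w = sg"
      proof (cases "z \<le> w")
        case True then show ?thesis using L_upto[OF zL wD] w by auto
      next
        case False
        have "so h (h z) z" using so_h so_sym by metis
        then have "so h (h z) w" using so_conv[OF h] w False by auto
        then have "hs h w = hs h z" using so_hs[OF h] so_h so_trans[OF h] so_sym by metis
        then show ?thesis using hz hsD[OF wD] by simp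
      qed
    qed
    then show ?thesis unfolding L_def using hzD zlt zD by auto
  qed
qed

lemma L_bwd: assumes cd: "c \<in> dom p" and hcL: "h c \<in> L" shows "c \<in> L"
proof -
  have pc: "p c = Some (h c)" using s cd unfolding sub_def by auto
  have cD: "c \<in> D p" using ran_D[OF pc] by auto
  have hcD: "h c \<le> x0" using L_D[OF hcL] by auto
  have hc: "hs h c = sg" using L_par[OF hcL] so_hs[OF h so_h[of h c]] by simp
  show ?thesis
  proof (cases "sg = 1")
    case True
    then have clt: "c < h c" using hc hs_pos by metis
    have "\<forall>w\<in>D p. c \<le> w \<and> w \<le> x0 \<longrightarrow> par p w = sg"
    proof (intro ballI impI)
      fix w assume wD: "w \<in> D p" and w: "c \<le> w \<and> w \<le> x0"
      show "par p w = sg"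
      proof (cases "h c \<le> w")
        case True then show ?thesis using L_upto[OF hcL wD] w by auto
      next
        case False
        then have "so h c w" using so_conv[OF h so_h[of h c]] w by auto
        then have "hs h w = hs h c" using so_hs[OF h] by metis
        then show ?thesis using hc hsD[OF wD] by simp
      qed
    qed
    then show ?thesis unfolding L_def using cD clt hcD by auto
  next
    case False
    then have "sg = -1" using sg01 by auto
    then have clt: "h c < c" using hc hs_neg by metis
    have "c \<le> x0"
    proof (rule ccontr)
      assume "\<not> c \<le> x0"
      then have "y0 \<le> c" using above cD by auto
      have sc: "so h (h c) c" using so_h so_sym by metis
      have "so h (h c) x0" using so_conv[OF h sc] hcD \<open>\<not> c \<le> x0\<close> by auto
      moreover have "so h (h c) y0" using so_conv[OF h sc] hcD bx(3) \<open>y0 \<le> c\<close> by auto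
      ultimately show False using bx(5) so_trans[OF h] so_sym by metis
    qed
    then show ?thesis using L_down[OF hcL cD] clt by auto
  qed
qed

lemma fL: "finite L" unfolding L_def using finite_D[OF p] by auto

lemma realizeL: "\<exists>e. (\<forall>x\<in>L. \<forall>z\<in>L. x < z \<longrightarrow> e x < e z) \<and> (\<forall>x\<in>L. so h y0 (e x) \<and> e x < y0)
   \<and> (\<forall>z\<in>L. z \<in> dom p \<longrightarrow> h (e z) = e (h z))"
proof (cases "sg = 1")
  case True
  define P where "P = {(z, h z) | z. z \<in> L \<and> z \<in> dom p}"
  have gy: "h y0 > y0" using hs_y0 True hs_pos by metis
  have PS: "\<forall>(a,a')\<in>P. a \<in> L \<and> a' \<in> L \<and> a < a'"
    unfolding P_def using L_fwd L_par True hs_pos by fastforce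
  have Pord: "\<forall>(a,a')\<in>P. \<forall>(b,b')\<in>P. a < b \<longleftrightarrow> a' < b'"
    unfolding P_def using AutQ_less[OF h] by fastforce
  obtain e where e: "\<forall>x\<in>L. \<forall>z\<in>L. x < z \<longrightarrow> e x < e z" "\<forall>x\<in>L. so h y0 (e x) \<and> e x < y0"
    "\<forall>(a,a')\<in>P. e a' = h (e a)"
    using realize[OF h gy fL PS Pord] by blast
  have "\<forall>z\<in>L. z \<in> dom p \<longrightarrow> h (e z) = e (h z)"
    using e(3) unfolding P_def by fastforce
  then show ?thesis using e by blast
next
  case False
  then have sgm: "sg = -1" using sg01 by auto
  define P where "P = {(h z, z) | z. z \<in> L \<and> z \<in> dom p}"
  have hi: "inv h \<in> AutQ" using AutQ_inv[OF h] .
  have "h y0 < y0" using hs_y0 sgm hs_neg by metis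
  then have gy: "inv h y0 > y0" using AutQ_less[OF hi, of "h y0" y0] AutQ_inv_f[OF h] by metis
  have PS: "\<forall>(a,a')\<in>P. a \<in> L \<and> a' \<in> L \<and> a < a'"
    unfolding P_def using L_fwd L_par sgm hs_neg by fastforce
  have Pord: "\<forall>(a,a')\<in>P. \<forall>(b,b')\<in>P. a < b \<longleftrightarrow> a' < b'"
    unfolding P_def using AutQ_less[OF h] by fastforce
  obtain e where e: "\<forall>x\<in>L. \<forall>z\<in>L. x < z \<longrightarrow> e x < e z" "\<forall>x\<in>L. so (inv h) y0 (e x) \<and> e x < y0"
    "\<forall>(a,a')\<in>P. e a' = inv h (e a)"
    using realize[OF hi gy fL PS Pord] by blast
  have "\<forall>z\<in>L. z \<in> dom p \<longrightarrow> h (e z) = e (h z)"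
  proof (intro ballI impI)
    fix z assume "z \<in> L" "z \<in> dom p"
    then have "(h z, z) \<in> P" unfolding P_def by auto
    then have "e z = inv h (e (h z))" using e(3) by auto
    then show "h (e z) = e (h z)" using AutQ_f_inv[OF h] by simp
  qed
  moreover have "\<forall>x\<in>L. so h y0 (e x) \<and> e x < y0" using e(2) so_inv[OF h] by simp
  ultimately show ?thesis using e(1) by blast
qed

end

context fix1 begin

lemma notL_witness: assumes aD: "a \<in> D p" and ax: "a \<le> x0" and aL: "a \<notin> L"
  shows "\<exists>w\<in>D p. a \<le> w \<and> w \<le> x0 \<and> par p w \<noteq> sg"
  using assms unfolding L_def by blast

lemma fix1_main: "\<exists>h1\<in>conjs h. sub p h1 \<and> BB h1 p \<subset> BB h p"
proof -
  obtain e where e1: "\<forall>x\<in>L. \<forall>z\<in>L. x < z \<longrightarrow> e x < e z"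
    and e2: "\<forall>x\<in>L. so h y0 (e x) \<and> e x < y0"
    and e3: "\<forall>z\<in>L. z \<in> dom p \<longrightarrow> h (e z) = e (h z)"
    using realizeL by blast
  define E where "E z = (if z \<in> L then e z else z)" for z
  have y0L: "y0 \<notin> L" using L_D bx(3) by fastforce
  have below: "a < e b" if aD: "a \<in> D p" and aL: "a \<notin> L" and bL: "b \<in> L" and ab: "a < b" for a b
  proof -
    have "a \<le> x0" using ab L_D[OF bL] by auto
    then obtain w where w: "w \<in> D p" "a \<le> w" "w \<le> x0" "par p w \<noteq> sg" using notL_witness aD aL by blast
    have "w < b"
    proof (rule ccontr)
      assume "\<not> w < b"
      then have "par p w = sg" using L_upto[OF bL w(1)] w by auto
      then show False using w by auto
    qed
    have "hs h w \<noteq> hs h y0" using hs_y0 hsD[OF w(1)] w(4) by simp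
    then have "\<not> so h w y0" using so_hs[OF h] by metis
    moreover have "w < y0" using w bx(3) by auto
    ultimately have "w < e b" using orb_less[OF h _ _ so_refl] e2 bL by blast
    then show ?thesis using w by auto
  qed
  have Emono: "\<forall>a\<in>D p. \<forall>b\<in>D p. a < b \<longrightarrow> E a < E b"
  proof (intro ballI impI)
    fix a b assume aD: "a \<in> D p" and bD: "b \<in> D p" and ab: "a < b"
    consider "a \<in> L" "b \<in> L" | "a \<notin> L" "b \<notin> L" | "a \<in> L" "b \<notin> L" | "a \<notin> L" "b \<in> L" by blast
    then show "E a < E b"
    proof cases
      case 1 then show ?thesis using e1 ab unfolding E_def by auto
    next
      case 2 then show ?thesis using ab unfolding E_def by auto
    next
      case 3
      have "\<not> b \<le> x0" using L_down[OF 3(1) bD] ab 3(2) by auto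
      then have "y0 \<le> b" using above bD by auto
      then show ?thesis using 3 e2 unfolding E_def by force
    next
      case 4 then show ?thesis using below aD ab unfolding E_def by auto
    qed
  qed
  obtain \<rho>0 where r0: "\<rho>0 \<in> AutQ" "\<forall>z\<in>D p. \<rho>0 z = E z"
    using extend_aut[OF finite_D[OF p] Emono] by blast
  define h1 where "h1 = inv \<rho>0 \<circ> h \<circ> \<rho>0"
  have ir: "inv \<rho>0 \<in> AutQ" using AutQ_inv[OF r0(1)] .
  have "inv (inv \<rho>0) = \<rho>0" using AutQ_bij[OF r0(1)] by (simp add: inv_inv_eq)
  then have "h1 = inv \<rho>0 \<circ> h \<circ> inv (inv \<rho>0)" unfolding h1_def by simp
  then have h1c: "h1 \<in> conjs h" unfolding conjs_def using ir by blast
  have subh1: "sub p h1" unfolding sub_def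
  proof
    fix z assume zd: "z \<in> dom p"
    have pz: "p z = Some (h z)" using s zd unfolding sub_def by auto
    have zD: "z \<in> D p" and hzD: "h z \<in> D p" using ran_D[OF pz] by auto
    have "h (E z) = E (h z)"
    proof (cases "z \<in> L")
      case True
      then show ?thesis using L_fwd[OF True zd] e3 zd unfolding E_def by auto
    next
      case False
      then have "h z \<notin> L" using L_bwd zd by blast
      then show ?thesis using False unfolding E_def by auto
    qed
    then have "h1 z = inv \<rho>0 (\<rho>0 (h z))" unfolding h1_def using r0(2) zD hzD by simp
    then have "h1 z = h z" using AutQ_inv_f[OF r0(1)] by simp
    then show "p z = Some (h1 z)" using pz by simp
  qed
  have soh1: "so h1 a b = so h (E a) (E b)" if "a \<in> D p" "b \<in> D p" for a b
    unfolding h1_def using so_conj[OF r0(1) h] r0(2) that by simp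
  have sub_BB: "BB h1 p \<subseteq> BB h p"
  proof
    fix ab assume "ab \<in> BB h1 p"
    then obtain a b where abe: "ab = (a, b)" and bb: "bad_br h1 p a b" unfolding BB_def by auto
    have aD: "a \<in> D p" and bD: "b \<in> D p" and ab: "a < b" and pa: "par p a \<noteq> 0"
      and ns1: "\<not> so h1 a b"
      and bl: "\<forall>w\<in>D p. a \<le> w \<and> w \<le> b \<longrightarrow> par p w = par p a"
      using bb unfolding bad_br_def by blast+
    have nsE: "\<not> so h (E a) (E b)" using ns1 soh1 aD bD by simp
    have "\<not> so h a b"
    proof (cases "a \<in> L")
      case True
      show ?thesis
      proof (cases "b \<in> L")
        case True
        have "so h y0 (e a)" "so h y0 (e b)" using e2 \<open>a \<in> L\<close> True by auto
        then have "so h (e a) (e b)" using so_trans[OF h] so_sym by metis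
        then show ?thesis using nsE True \<open>a \<in> L\<close> unfolding E_def by simp
      next
        case False
        have "\<not> b \<le> x0" using L_down[OF \<open>a \<in> L\<close> bD] ab False by auto
        then have "y0 \<le> b" using above bD by auto
        have ax: "a \<le> x0" using L_D[OF \<open>a \<in> L\<close>] by auto
        show ?thesis
        proof
          assume "so h a b"
          then have "so h a x0" "so h a y0" using so_conv[OF h] ax \<open>\<not> b \<le> x0\<close> \<open>y0 \<le> b\<close> bx(3) by auto
          then show False using bx(5) so_trans[OF h] so_sym by metis
        qed
      qed
    next
      case False
      show ?thesis
      proof (cases "b \<in> L")
        case True
        have bx0: "b \<le> x0" using L_D[OF True] by auto
        have pb: "par p b = sg" using L_upto[OF True bD] bx0 by auto
        have "b \<le> b" by simp
        have "par p b = par p a" using bl[rule_format, OF bD] ab by auto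
        then have pas: "par p a = sg" using pb by simp
        have "\<forall>w\<in>D p. a \<le> w \<and> w \<le> x0 \<longrightarrow> par p w = sg"
        proof (intro ballI impI)
          fix w assume wD: "w \<in> D p" and w: "a \<le> w \<and> w \<le> x0"
          show "par p w = sg"
          proof (cases "w \<le> b")
            case True
            then have "a \<le> w \<and> w \<le> b" using w by auto
            from bl[rule_format, OF wD this] show ?thesis using pas by simp
          next
            case False
            then show ?thesis using L_upto[OF \<open>b \<in> L\<close> wD] w by auto
          qed
        qed
        then have "a \<in> L" unfolding L_def using aD ab bx0 by auto
        then show ?thesis using False by simp
      next
        case False
        then show ?thesis using nsE \<open>a \<notin> L\<close> unfolding E_def by simp
      qed
    qed
    then have "bad_br h p a b" using bad_brI[OF aD bD ab pa bl] by blast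
    then show "ab \<in> BB h p" using abe unfolding BB_def by simp
  qed
  have "(x0, y0) \<in> BB h p" using bad unfolding BB_def by simp
  moreover have "(x0, y0) \<notin> BB h1 p"
  proof
    assume "(x0, y0) \<in> BB h1 p"
    then have "\<not> so h1 x0 y0" unfolding BB_def bad_br_def by blast
    moreover have "so h (E x0) (E y0)" using e2 x0L y0L so_sym unfolding E_def by simp
    ultimately show False using soh1 bx by simp
  qed
  ultimately have "BB h1 p \<subset> BB h p" using sub_BB by blast
  then show ?thesis using h1c subh1 by blast
qed

end

lemma step1: assumes h: "h \<in> AutQ" and p: "p \<in> PI" and s: "sub p h"
  shows "\<exists>h'\<in>conjs h. sub p h' \<and> consol h' p"
proof -
  have "\<forall>h. h \<in> AutQ \<longrightarrow> sub p h \<longrightarrow> card (BB h p) = n \<longrightarrow> (\<exists>h'\<in>conjs h. sub p h' \<and> consol h' p)" for n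
  proof (induction n rule: less_induct)
    case (less n)
    show ?case
    proof (intro allI impI)
      fix h assume h: "h \<in> AutQ" and s: "sub p h" and cn: "card (BB h p) = n"
      show "\<exists>h'\<in>conjs h. sub p h' \<and> consol h' p"
      proof (cases "BB h p = {}")
        case True
        then show ?thesis using consol_BB conjs_refl s by blast
      next
        case False
        obtain x y where xy: "bad_br h p x y" "\<forall>z\<in>D p. \<not> (x < z \<and> z < y)"
          using bad_consec[OF p h False] by blast
        interpret fix1 h p x y using h p s xy by unfold_locales
        obtain h1 where h1: "h1 \<in> conjs h" "sub p h1" "BB h1 p \<subset> BB h p" using fix1_main by blast
        have "card (BB h1 p) < n" using psubset_card_mono[OF BB_fin[OF p] h1(3)] cn by simp
        moreover have "h1 \<in> AutQ" using conjs_AutQ h h1 by blast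
        ultimately obtain h' where "h' \<in> conjs h1" "sub p h'" "consol h' p"
          using less h1 by blast
        then show ?thesis using conjs_trans h1 by blast
      qed
    qed
  qed
  then show ?thesis using h s by blast
qed

lemma core: assumes h: "h \<in> AutQ" and p: "p \<in> PI" and s: "sub p h"
  shows "\<exists>h'\<in>conjs h. \<exists>q\<in>P_gd. p \<subseteq>\<^sub>m q \<and> sub q h'"
proof -
  obtain h' where h': "h' \<in> conjs h" "sub p h'" "consol h' p" using step1[OF h p s] by blast
  have "h' \<in> AutQ" using conjs_AutQ h h' by blast
  then obtain q where "q \<in> P_gd" "p \<subseteq>\<^sub>m q" "sub q h'" using step2_main p h' by blast
  then show ?thesis using h' by blast
qed

lemma sub_map_le: "sub q g \<Longrightarrow> q \<subseteq>\<^sub>m (Some \<circ> g)"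
  unfolding sub_def map_le_def by auto

lemma conjs_Cl: assumes g: "\<gamma> \<in> AutQ" and sg: "\<sigma> \<in> AutQ" and hc: "h' \<in> conjs (\<sigma> \<circ> \<gamma> \<circ> inv \<sigma>)"
  shows "h' \<in> Cl \<gamma>"
proof -
  obtain \<rho> where r: "\<rho> \<in> AutQ" "h' = \<rho> \<circ> (\<sigma> \<circ> \<gamma> \<circ> inv \<sigma>) \<circ> inv \<rho>" using hc unfolding conjs_def by auto
  have t: "\<rho> \<circ> \<sigma> \<in> AutQ" using AutQ_comp r sg by blast
  have eq: "h' = (\<rho> \<circ> \<sigma>) \<circ> \<gamma> \<circ> inv (\<rho> \<circ> \<sigma>)" using r inv_comp_AutQ[OF r(1) sg] by (simp add: o_assoc)
  have "h' \<in> AutQ" using eq t g AutQ_comp AutQ_inv by metis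
  moreover have "\<forall>A. finite A \<longrightarrow> (\<exists>\<tau>\<in>AutQ. \<forall>x\<in>A. h' x = (\<tau> \<circ> \<gamma> \<circ> inv \<tau>) x)"
    using eq t by blast
  ultimately show ?thesis unfolding Cl_def by blast
qed

theorem lemma4p3:
  shows "(\<forall>p\<in>PI. \<exists>q\<in>P_gd. p \<subseteq>\<^sub>m q) \<and>
         (\<forall>\<gamma>\<in>AutQ. \<forall>p\<in>P_gamma \<gamma>. \<exists>q\<in>P_gd \<inter> P_gamma \<gamma>. p \<subseteq>\<^sub>m q)"
proof (intro conjI ballI)
  fix p assume p: "p \<in> PI"
  have fd: "finite (dom p)" using p unfolding PI_def by auto
  have mono: "\<forall>x\<in>dom p. \<forall>y\<in>dom p. x < y \<longrightarrow> the (p x) < the (p y)" using p unfolding PI_def by auto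
  obtain \<rho> where r: "\<rho> \<in> AutQ" "\<forall>x\<in>dom p. \<rho> x = the (p x)" using extend_aut[OF fd mono] by blast
  have "sub p \<rho>" unfolding sub_def using r by auto
  then show "\<exists>q\<in>P_gd. p \<subseteq>\<^sub>m q" using core[OF r(1) p] by blast
next
  fix \<gamma> p assume g: "\<gamma> \<in> AutQ" and pg: "p \<in> P_gamma \<gamma>"
  then have p: "p \<in> PI" and "\<exists>g\<in>Cl \<gamma>. p \<subseteq>\<^sub>m (Some \<circ> g)" unfolding P_gamma_def by auto
  then obtain gg where gg: "gg \<in> Cl \<gamma>" "p \<subseteq>\<^sub>m (Some \<circ> gg)" by blast
  have fd: "finite (dom p)" using p unfolding PI_def by auto
  obtain \<sigma> where sg: "\<sigma> \<in> AutQ" "\<forall>x\<in>dom p. gg x = (\<sigma> \<circ> \<gamma> \<circ> inv \<sigma>) x"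
    using gg(1) fd unfolding Cl_def by blast
  define h where "h = \<sigma> \<circ> \<gamma> \<circ> inv \<sigma>"
  have hA: "h \<in> AutQ" unfolding h_def using AutQ_comp AutQ_inv sg g by metis
  have sh: "sub p h" unfolding sub_def
  proof
    fix x assume "x \<in> dom p"
    then have "p x = Some (gg x)" using gg(2) unfolding map_le_def by auto
    then show "p x = Some (h x)" using sg \<open>x \<in> dom p\<close> unfolding h_def by simp
  qed
  obtain h' q where hq: "h' \<in> conjs h" "q \<in> P_gd" "p \<subseteq>\<^sub>m q" "sub q h'" using core[OF hA p sh] by blast
  have "h' \<in> Cl \<gamma>" using conjs_Cl[OF g sg(1)] hq(1) unfolding h_def by simp
  moreover have "q \<in> PI" using hq(2) unfolding P_gd_def by auto
  ultimately have "q \<in> P_gamma \<gamma>" unfolding P_gamma_def using sub_map_le[OF hq(4)] by blast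
  then show "\<exists>q\<in>P_gd \<inter> P_gamma \<gamma>. p \<subseteq>\<^sub>m q" using hq by blast
qed

end
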